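(* Consider the problem, assumptions and the algorithm DProxSGT described in the context, and let $\eta\le\lambda\le\frac{1}{4L}$. Then for every $t\ge0$, $$\sum_{i=1}^n\mathbb{E}[\phi_\lambda(\mathbf{x}_i^{t+1})]\le\sum_{i=1}^n\mathbb{E}[\phi_\lambda(\mathbf{x}_i^t)]+\frac4\lambda\mathbb{E}\big[\|\mathbf{X}_\perp^t\|^2\big]+\frac{4\eta^2}{\lambda}\mathbb{E}\big[\|\mathbf{Y}_\perp^t\|^2\big]-\frac{\eta}{4\lambda^2}\mathbb{E}\big[\|\widehat{\mathbf{X}}^t-\mathbf{X}^t\|^2\big]+\frac{\eta^2\sigma^2}{\lambda}.$$
   Context: Problem: $n\ge1$ workers, $d\ge1$. For each $i$, $\mathcal{D}_i$ is a distribution, $F_i(\cdot,\xi):\mathbb{R}^d\to\mathbb{R}$, $f_i(\mathbf{x})=\mathbb{E}_{\xi_i\sim\mathcal{D}_i}[F_i(\mathbf{x},\xi_i)]$, $f=\frac1n\sum_if_i$, $\phi=f+r$. Assumptions: $r$ is closed convex; each $f_i$ is $L$-smooth on $\mathrm{dom}(r)$; $\min\phi>-\infty$. Mixing matrix $\mathbf{W}\in\mathbb{R}^{n\times n}$ on a connected graph: doubly stochastic, $\mathbf{W}_{ij}=0$ if $i\ne j$ are not neighbors, $\mathrm{Null}(\mathbf{W}-\mathbf{I})=\mathrm{span}\{\mathbf{1}\}$, $\|\mathbf{W}-\mathbf{J}\|_2<1$ with $\mathbf{J}=\mathbf{1}\mathbf{1}^\top/n$. Stochastic gradients: samples $\{\xi_i^t\}$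 independent; for all $i$ and $\mathbf{x}\in\mathrm{dom}(r)$, $\mathbb{E}_{\xi_i}[\nabla F_i(\mathbf{x},\xi_i)]=\nabla f_i(\mathbf{x})$ and $\mathbb{E}_{\xi_i}\|\nabla F_i(\mathbf{x},\xi_i)-\nabla f_i(\mathbf{x})\|^2\le\sigma^2$. Algorithm DProxSGT with step size $\eta>0$: initialize $\mathbf{x}_i^0$, $\mathbf{y}_i^{-1}=\mathbf{0}$, $\nabla F_i(\mathbf{x}_i^{-1},\xi_i^{-1})=\mathbf{0}$. For $t=0,1,\dots$, node $i$ draws $\xi_i^t\sim\mathcal{D}_i$ and sets $\mathbf{y}_i^{t-1/2}=\mathbf{y}_i^{t-1}+\nabla F_i(\mathbf{x}_i^t,\xi_i^t)-\nabla F_i(\mathbf{x}_i^{t-1},\xi_i^{t-1})$, $\mathbf{y}_i^t=\sum_j\mathbf{W}_{ji}\mathbf{y}_j^{t-1/2}$, $\mathbf{x}_i^{t+1/2}=\mathrm{prox}_{\eta r}(\mathbf{x}_i^t-\eta\mathbf{y}_i^t)$ with $\mathrm{prox}_{\eta r}(\mathbf{z})=\arg\min_{\mathbf{u}}\{r(\mathbf{u})+\frac1{2\eta}\|\mathbf{u}-\mathbf{z}\|^2\}$, $\mathbf{x}_i^{t+1}=\sum_j\mathbf{W}_{ji}\mathbf{x}_j^{t+1/2}$. Notation: $\mathbf{X}^t=[\mathbf{x}_1^t,\dots,\mathbf{x}_n^t]$, $\mathbf{Y}^t$ analogously; $\|\cdot\|$ Frobenius norm; $\mathbf{X}_\perp=\mathbf{X}(\mathbf{I}-\mathbf{J})$;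 $\mathbb{E}$ full expectation. For $\lambda\in(0,1/L)$, $\phi_\lambda(\mathbf{x})=\min_{\mathbf{y}}\{\phi(\mathbf{y})+\frac1{2\lambda}\|\mathbf{y}-\mathbf{x}\|^2\}$ (Moreau envelope), $\mathrm{prox}_{\lambda\phi}(\mathbf{x})$ its unique minimizer, and $\widehat{\mathbf{X}}^t=[\mathrm{prox}_{\lambda\phi}(\mathbf{x}_1^t),\dots,\mathrm{prox}_{\lambda\phi}(\mathbf{x}_n^t)]$. *)

theory Defs
  imports "HOL-Analysis.Analysis" "HOL-Probability.Probability"
begin

definition prox_of :: "('a::real_normed_vector \<Rightarrow> ereal) \<Rightarrow> real \<Rightarrow> 'a \<Rightarrow> 'a" where
  "prox_of g \<gamma> z =
     (SOME u. \<forall>v. g u + ereal (norm (u - z)^2 / (2 * \<gamma>)) \<le> g v + ereal (norm (v - z)^2 / (2 * \<gamma>)))"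

definition moreau :: "('a::real_normed_vector \<Rightarrow> ereal) \<Rightarrow> real \<Rightarrow> 'a \<Rightarrow> ereal" where
  "moreau g \<gamma> x = (INF y. g y + ereal (norm (y - x)^2 / (2 * \<gamma>)))"

definition edom :: "('a \<Rightarrow> ereal) \<Rightarrow> 'a set" where
  "edom r = {x. r x < \<infinity>}"

definition closed_proper_convex :: "('a::real_normed_vector \<Rightarrow> ereal) \<Rightarrow> bool" where
  "closed_proper_convex r \<longleftrightarrow>
     (\<forall>x. r x > -\<infinity>) \<and> (\<exists>x. r x < \<infinity>) \<and>
     convex {(x, t::real). r x \<le> ereal t} \<and> closed {(x, t::real). r x \<le> ereal t}"

text \<open>State of DProxSGT at iteration t (sample path omega):
  (X^t, Y^(t-1), stochastic gradients at iteration t-1).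
  Node i's vectors are the columns X i. The mixing uses W $ j $ i.\<close>
fun dprox_state ::
  "real^'n^'n \<Rightarrow> ('n::finite \<Rightarrow> 'a::real_normed_vector \<Rightarrow> 'b \<Rightarrow> 'a) \<Rightarrow> ('a \<Rightarrow> ereal) \<Rightarrow> real
   \<Rightarrow> ('n \<Rightarrow> 'a) \<Rightarrow> (nat \<Rightarrow> 'n \<Rightarrow> 'w \<Rightarrow> 'b) \<Rightarrow> nat \<Rightarrow> 'w
   \<Rightarrow> ('n \<Rightarrow> 'a) \<times> ('n \<Rightarrow> 'a) \<times> ('n \<Rightarrow> 'a)" where
  "dprox_state W G r \<eta> x0 xi 0 \<omega> = (x0, (\<lambda>_. 0), (\<lambda>_. 0))"
| "dprox_state W G r \<eta> x0 xi (Suc t) \<omega> =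
     (let (X, Y, Gp) = dprox_state W G r \<eta> x0 xi t \<omega>;
          Gt = (\<lambda>i. G i (X i) (xi t i \<omega>));
          Yh = (\<lambda>i. Y i + Gt i - Gp i);
          Yn = (\<lambda>i. \<Sum>j\<in>UNIV. (W $ j $ i) *\<^sub>R Yh j);
          Xh = (\<lambda>i. prox_of r \<eta> (X i - \<eta> *\<^sub>R Yn i));
          Xn = (\<lambda>i. \<Sum>j\<in>UNIV. (W $ j $ i) *\<^sub>R Xh j)
      in (Xn, Yn, Gt))"

definition dX where
  "dX W G r \<eta> x0 xi t \<omega> = fst (dprox_state W G r \<eta> x0 xi t \<omega>)"

text \<open>y_i^t (computed during iteration t, i.e. stored in state t+1)\<close>
definition dY where
  "dY W G r \<eta> x0 xi t \<omega> = fst (snd (dprox_state W G r \<eta> x0 xi (Suc t) \<omega>))"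

text \<open>Squared Frobenius norm of the consensus error X(I - J).\<close>
definition perp_sq :: "('n::finite \<Rightarrow> 'a::real_inner) \<Rightarrow> real" where
  "perp_sq X = (\<Sum>i\<in>UNIV. norm (X i - (1 / real CARD('n)) *\<^sub>R (\<Sum>j\<in>UNIV. X j))^2)"

end

theory Submission
  imports Defs
begin

section \<open>Generic convex-analysis helpers\<close>

lemma cpc_notminf: "closed_proper_convex r \<Longrightarrow> r x \<noteq> -\<infinity>"
  unfolding closed_proper_convex_def by (metis ereal_less(6) order_less_irrefl)

lemma cpc_real: "closed_proper_convex r \<Longrightarrow> x \<in> edom r \<Longrightarrow> r x = ereal (real_of_ereal (r x))"
  using cpc_notminf[of r x] unfolding edom_def by (cases "r x") auto

lemma cpc_epi_mem: "closed_proper_convex r \<Longrightarrow> x \<in> edom r \<Longrightarrow>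
   (x, real_of_ereal (r x)) \<in> {(x, t::real). r x \<le> ereal t}"
  using cpc_real[of r x] by auto

lemma cpc_ex: "closed_proper_convex r \<Longrightarrow> \<exists>p. p \<in> edom r"
  unfolding closed_proper_convex_def edom_def by auto

lemma cpc_jensen:
  assumes r: "closed_proper_convex r" and I: "finite I" and w: "\<And>i. i \<in> I \<Longrightarrow> w i \<ge> 0"
    and w1: "sum w I = 1" and y: "\<And>i. i \<in> I \<Longrightarrow> y i \<in> edom r"
  shows "r (\<Sum>i\<in>I. w i *\<^sub>R y i) \<le> ereal (\<Sum>i\<in>I. w i * real_of_ereal (r (y i)))"
proof -
  have cv: "convex {(x, t::real). r x \<le> ereal t}" using r unfolding closed_proper_convex_def by auto
  have "(\<Sum>i\<in>I. w i *\<^sub>R (y i, real_of_ereal (r (y i)))) \<in> {(x, t::real). r x \<le> ereal t}"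
    by (rule convex_sum[OF I cv w1]) (use w cpc_epi_mem[OF r y] in auto)
  moreover have "(\<Sum>i\<in>I. w i *\<^sub>R (y i, real_of_ereal (r (y i)))) =
     ((\<Sum>i\<in>I. w i *\<^sub>R y i), (\<Sum>i\<in>I. w i * real_of_ereal (r (y i))))"
    by (simp add: prod_eq_iff fst_sum snd_sum)
  ultimately show ?thesis by simp
qed

lemma cpc_convex_dom: assumes r: "closed_proper_convex r" shows "convex (edom r)"
proof (rule convexI)
  fix x y :: 'a and u v :: real
  assume x: "x \<in> edom r" and y: "y \<in> edom r" and u: "0 \<le> u" and v: "0 \<le> v" and uv: "u + v = 1"
  let ?w = "\<lambda>i::bool. if i then u else v" and ?y = "\<lambda>i::bool. if i then x else y"
  have "r (\<Sum>i\<in>UNIV. ?w i *\<^sub>R ?y i) \<le> ereal (\<Sum>i\<in>UNIV. ?w i * real_of_ereal (r (?y i)))"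
    by (rule cpc_jensen[OF r]) (use u v uv x y in \<open>auto simp: UNIV_bool\<close>)
  then have h: "r (u *\<^sub>R x + v *\<^sub>R y) \<le> ereal (u * real_of_ereal (r x) + v * real_of_ereal (r y))"
    by (simp add: UNIV_bool add.commute)
  have "r (u *\<^sub>R x + v *\<^sub>R y) < \<infinity>" by (rule le_less_trans[OF h]) simp
  then show "u *\<^sub>R x + v *\<^sub>R y \<in> edom r" by (simp add: edom_def)
qed

lemma cpc_closed_epi: "closed_proper_convex r \<Longrightarrow> closed {(x, t::real). r x \<le> ereal t}"
  unfolding closed_proper_convex_def by auto

lemma cpc_epi_limit:
  assumes r: "closed_proper_convex r" and xs: "xs \<longlonglongrightarrow> l" and ts: "ts \<longlonglongrightarrow> t"
    and le: "\<And>n. r (xs n) \<le> ereal (ts n)"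
  shows "r l \<le> ereal t"
proof -
  have m: "\<forall>n. (\<lambda>n. (xs n, ts n)) n \<in> {(x, t::real). r x \<le> ereal t}" using le by auto
  have cl: "closed {(x, t::real). r x \<le> ereal t}" by (rule cpc_closed_epi[OF r])
  have "(l, t) \<in> {(x, t::real). r x \<le> ereal t}"
    by (rule cl[unfolded closed_sequential_limits, rule_format, OF conjI[OF m tendsto_Pair[OF xs ts]]])
  then show ?thesis by simp
qed

lemma bounded_by_quad:
  fixes S :: "'a::real_normed_vector set"
  assumes a: "\<alpha> > 0" and h: "\<And>x. x \<in> S \<Longrightarrow> \<alpha> * norm x ^ 2 \<le> \<beta> * norm x + \<gamma>"
  shows "bounded S"
proof -
  have "norm x \<le> max 1 ((\<bar>\<beta>\<bar> + \<bar>\<gamma>\<bar>) / \<alpha>)" if x: "x \<in> S" for x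
  proof (cases "norm x \<le> 1")
    case False
    then have n1: "norm x \<ge> 1" by simp
    have "\<alpha> * norm x * norm x \<le> \<beta> * norm x + \<gamma>" using h[OF x] by (simp add: power2_eq_square)
    also have "\<dots> \<le> \<bar>\<beta>\<bar> * norm x + \<bar>\<gamma>\<bar> * norm x"
    proof (intro add_mono)
      show "\<beta> * norm x \<le> \<bar>\<beta>\<bar> * norm x" by (intro mult_right_mono) auto
      have "\<bar>\<gamma>\<bar> * 1 \<le> \<bar>\<gamma>\<bar> * norm x" using n1 by (intro mult_left_mono) auto
      then show "\<gamma> \<le> \<bar>\<gamma>\<bar> * norm x" by linarith
    qed
    finally have "(\<alpha> * norm x) * norm x \<le> (\<bar>\<beta>\<bar> + \<bar>\<gamma>\<bar>) * norm x" by (simp add: algebra_simps)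
    then have "\<alpha> * norm x \<le> \<bar>\<beta>\<bar> + \<bar>\<gamma>\<bar>" using n1 by (cases "x = 0") (auto simp: mult_le_cancel_right)
    then have "norm x \<le> (\<bar>\<beta>\<bar> + \<bar>\<gamma>\<bar>) / \<alpha>" using a by (simp add: field_simps)
    then show ?thesis by simp
  qed simp
  then show ?thesis unfolding bounded_iff by blast
qed

lemma exist_min:
  fixes r :: "'a::euclidean_space \<Rightarrow> ereal" and g \<psi> :: "'a \<Rightarrow> real"
  assumes r: "closed_proper_convex r"
    and gc: "continuous_on (edom r) g"
    and \<psi>c: "continuous_on UNIV \<psi>"
    and \<psi>g: "\<And>x. x \<in> edom r \<Longrightarrow> \<psi> x \<le> g x"
    and bd: "\<And>a. bounded {x \<in> edom r. g x + real_of_ereal (r x) \<le> a}"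
  shows "\<exists>u \<in> edom r. \<forall>v. r u + ereal (g u) \<le> r v + ereal (g v)"
proof -
  define D where "D = edom r"
  define val where "val x = g x + real_of_ereal (r x)" for x
  define K where "K a = {x \<in> D. val x \<le> a}" for a
  have rD: "r x = ereal (real_of_ereal (r x))" if "x \<in> D" for x using cpc_real[OF r] that D_def by auto
  have clK: "closed (K a)" for a
    unfolding closed_sequential_limits
  proof (intro allI impI, elim conjE)
    fix xs l assume xsK: "\<forall>n. xs n \<in> K a" and lim: "xs \<longlonglongrightarrow> l"
    have xsD: "xs n \<in> D" for n using xsK K_def by auto
    have le1: "r (xs n) \<le> ereal (a - \<psi> (xs n))" for n
    proof -
      have "xs n \<in> K a" using xsK by blast
      then have "val (xs n) \<le> a" unfolding K_def by blast
      then have "g (xs n) + real_of_ereal (r (xs n)) \<le> a" unfolding val_def .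
      moreover have "\<psi> (xs n) \<le> g (xs n)" using \<psi>g xsD[of n] unfolding D_def by blast
      ultimately have "real_of_ereal (r (xs n)) \<le> a - \<psi> (xs n)" by linarith
      then show ?thesis by (subst rD[OF xsD[of n]]) simp
    qed
    have "(\<lambda>n. \<psi> (xs n)) \<longlonglongrightarrow> \<psi> l" by (rule continuous_on_tendsto_compose[OF \<psi>c lim]) auto
    then have "(\<lambda>n. a - \<psi> (xs n)) \<longlonglongrightarrow> a - \<psi> l" by (rule tendsto_diff[OF tendsto_const])
    from cpc_epi_limit[OF r lim this le1] have "r l \<le> ereal (a - \<psi> l)" .
    then have "r l < \<infinity>" by (rule le_less_trans) simp
    then have lD: "l \<in> D" unfolding D_def edom_def by simp
    have le2: "r (xs n) \<le> ereal (a - g (xs n))" for n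
    proof -
      have "xs n \<in> K a" using xsK by blast
      then have "val (xs n) \<le> a" unfolding K_def by blast
      then have "real_of_ereal (r (xs n)) \<le> a - g (xs n)" unfolding val_def by linarith
      then show ?thesis by (subst rD[OF xsD[of n]]) simp
    qed
    have "(\<lambda>n. g (xs n)) \<longlonglongrightarrow> g l"
      by (rule continuous_on_tendsto_compose[OF gc lim]) (use lD xsD D_def in auto)
    then have "(\<lambda>n. a - g (xs n)) \<longlonglongrightarrow> a - g l" by (rule tendsto_diff[OF tendsto_const])
    from cpc_epi_limit[OF r lim this le2] have "r l \<le> ereal (a - g l)" .
    then have "real_of_ereal (r l) \<le> a - g l" by (subst (asm) rD[OF lD]) simp
    then show "l \<in> K a" using lD unfolding K_def val_def by auto
  qed
  have cK: "compact (K a)" for a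
  proof -
    have "K a = {x \<in> edom r. g x + real_of_ereal (r x) \<le> a}" unfolding K_def val_def D_def by simp
    then have "bounded (K a)" using bd[of a] by simp
    then show ?thesis using clK[of a] compact_eq_bounded_closed by blast
  qed
  obtain p where pD: "p \<in> D" using cpc_ex[OF r] D_def by auto
  have "K (val p) \<inter> \<Inter> (K ` (val ` K (val p))) \<noteq> {}"
  proof (rule compact_imp_fip_image[OF cK])
    fix I' assume fin: "finite I'" and sub: "I' \<subseteq> val ` K (val p)"
    show "K (val p) \<inter> \<Inter> (K ` I') \<noteq> {}"
    proof (cases "I' = {}")
      case True
      have "val p \<le> val p" by simp
      then have "p \<in> K (val p)" using pD unfolding K_def by blast
      then show ?thesis using True by blast
    next
      case False
      have "Min I' \<in> I'" by (rule Min_in[OF fin False])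
      then have "Min I' \<in> val ` K (val p)" using sub by blast
      then obtain x where x: "x \<in> K (val p)" and vx: "Min I' = val x" by (rule imageE)
      have xD: "x \<in> D" using x unfolding K_def by blast
      have "x \<in> K a" if "a \<in> I'" for a
      proof -
        have "val x \<le> a" using Min_le[OF fin that] vx by simp
        then show ?thesis using xD unfolding K_def by blast
      qed
      then have "x \<in> K (val p) \<inter> \<Inter> (K ` I')" using x by blast
      then show ?thesis by blast
    qed
  qed (rule clK)
  then obtain u where u: "u \<in> K (val p) \<inter> \<Inter> (K ` (val ` K (val p)))" by blast
  then have uK: "u \<in> K (val p)" by blast
  have umin: "u \<in> K (val x)" if "x \<in> K (val p)" for x using u that by blast
  have uD: "u \<in> D" using uK K_def by auto
  have "val u \<le> val v" if "v \<in> D" for v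
  proof (cases "val v \<le> val p")
    case True then show ?thesis using umin[of v] that K_def by auto
  next
    case False then show ?thesis using uK K_def by auto
  qed
  then have "r u + ereal (g u) \<le> r v + ereal (g v)" for v
  proof (cases "v \<in> D")
    case True
    have "r u + ereal (g u) = ereal (val u)" unfolding val_def by (subst rD[OF uD]) simp
    moreover have "r v + ereal (g v) = ereal (val v)" unfolding val_def by (subst rD[OF True]) simp
    ultimately show ?thesis using \<open>v \<in> D \<Longrightarrow> val u \<le> val v\<close> True by simp
  next
    case False
    then have "r v = \<infinity>" unfolding D_def edom_def by (simp add: top.not_eq_extremum)
    then show ?thesis by simp
  qed
  then show ?thesis using uD D_def by blast
qed

lemma small_pos_nonneg:
  fixes A K :: real
  assumes h: "\<And>s. 0 < s \<Longrightarrow> s \<le> 1 \<Longrightarrow> 0 \<le> A + s * K"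
  shows "0 \<le> A"
proof (rule ccontr)
  assume "\<not> 0 \<le> A"
  then have A: "A < 0" by simp
  define s where "s = min 1 (- A / (2 * (\<bar>K\<bar> + 1)))"
  have pos: "- A / (2 * (\<bar>K\<bar> + 1)) > 0" using A by (intro divide_pos_pos) auto
  then have s0: "0 < s" unfolding s_def by auto
  have s1: "s \<le> 1" unfolding s_def by simp
  have "s * K \<le> s * \<bar>K\<bar>" using s0 by (simp add: mult_left_mono)
  also have "\<dots> \<le> (- A / (2 * (\<bar>K\<bar> + 1))) * \<bar>K\<bar>" unfolding s_def by (intro mult_right_mono) auto
  also have "\<dots> \<le> (- A / (2 * (\<bar>K\<bar> + 1))) * (\<bar>K\<bar> + 1)" using pos by (intro mult_left_mono) auto
  also have "\<dots> = - A / 2" by (simp add: field_simps)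
  finally have "A + s * K < 0" using A by linarith
  with h[OF s0 s1] show False by linarith
qed

lemma min_VI:
  fixes r :: "'a::real_inner \<Rightarrow> ereal"
  assumes r: "closed_proper_convex r" and uD: "u \<in> edom r"
    and umin: "\<And>v. r u + ereal (g u) \<le> r v + ereal (g v)"
    and quad: "\<And>v s. v \<in> edom r \<Longrightarrow> 0 < s \<Longrightarrow> s \<le> 1 \<Longrightarrow>
                  g (u + s *\<^sub>R (v - u)) \<le> g u + s * (d \<bullet> (v - u)) + s^2 * K v"
    and vD: "v \<in> edom r"
  shows "real_of_ereal (r v) \<ge> real_of_ereal (r u) - d \<bullet> (v - u)"
proof -
  define Ru where "Ru = real_of_ereal (r u)"
  define Rv where "Rv = real_of_ereal (r v)"
  have "0 \<le> (Rv - Ru + d \<bullet> (v - u)) + s * K v" if s0: "0 < s" and s1: "s \<le> 1" for s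
  proof -
    define y where "y = u + s *\<^sub>R (v - u)"
    have y_eq: "y = (1 - s) *\<^sub>R u + s *\<^sub>R v" unfolding y_def by (simp add: algebra_simps)
    let ?w = "\<lambda>i::bool. if i then 1 - s else s" and ?y = "\<lambda>i::bool. if i then u else v"
    have "r (\<Sum>i\<in>UNIV. ?w i *\<^sub>R ?y i) \<le> ereal (\<Sum>i\<in>UNIV. ?w i * real_of_ereal (r (?y i)))"
      by (rule cpc_jensen[OF r]) (use s0 s1 uD vD in \<open>auto simp: UNIV_bool\<close>)
    then have ry: "r y \<le> ereal ((1 - s) * Ru + s * Rv)"
      by (simp add: UNIV_bool y_eq Ru_def Rv_def add.commute)
    have "ereal (Ru + g u) \<le> r y + ereal (g y)"
      using umin[of y] cpc_real[OF r uD] unfolding Ru_def by (metis plus_ereal.simps(1))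
    also have "\<dots> \<le> ereal ((1 - s) * Ru + s * Rv) + ereal (g y)" using ry by (rule add_right_mono)
    finally have "Ru + g u \<le> (1 - s) * Ru + s * Rv + g y" by simp
    moreover have "g y \<le> g u + s * (d \<bullet> (v - u)) + s^2 * K v" unfolding y_def by (rule quad[OF vD s0 s1])
    ultimately have "0 \<le> s * (Rv - Ru + d \<bullet> (v - u)) + s * (s * K v)"
      by (simp add: algebra_simps power2_eq_square)
    then have "0 \<le> s * ((Rv - Ru + d \<bullet> (v - u)) + s * K v)" by (simp add: algebra_simps)
    then show ?thesis using s0 by (simp add: zero_le_mult_iff)
  qed
  from small_pos_nonneg[OF this] show ?thesis unfolding Ru_def Rv_def by simp
qed

lemma quad_bound_aux:
  fixes h :: "'a::real_inner \<Rightarrow> real"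
  assumes D: "convex D"
    and hd: "\<And>x. x \<in> D \<Longrightarrow> (h has_derivative (\<lambda>v. gh x \<bullet> v)) (at x within D)"
    and lip: "\<And>x y. x \<in> D \<Longrightarrow> y \<in> D \<Longrightarrow> norm (gh x - gh y) \<le> L * norm (x - y)"
    and x: "x \<in> D" and y: "y \<in> D" and sg: "sg = 1 \<or> sg = -1"
  shows "sg * (h y - h x - gh x \<bullet> (y - x)) \<le> L / 2 * norm (y - x) ^ 2"
proof -
  define \<gamma> where "\<gamma> s = x + s *\<^sub>R (y - x)" for s :: real
  have \<gamma>D: "\<gamma> s \<in> D" if "0 \<le> s" "s \<le> 1" for s
  proof -
    have "\<gamma> s = (1 - s) *\<^sub>R x + s *\<^sub>R y" unfolding \<gamma>_def by (simp add: algebra_simps)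
    then show ?thesis using D x y that by (simp add: convex_def)
  qed
  define \<psi> where "\<psi> s = sg * (h (\<gamma> s) - s * (gh x \<bullet> (y - x))) - L / 2 * s^2 * norm (y - x)^2" for s
  define \<psi>' where "\<psi>' s = (\<lambda>t. t * (sg * (gh (\<gamma> s) \<bullet> (y - x) - gh x \<bullet> (y - x)) - L * s * norm (y - x)^2))" for s
  have der: "(\<psi> has_derivative \<psi>' s) (at s within {0..1})" if s: "0 \<le> s" "s \<le> 1" for s
  proof -
    have g1: "(\<gamma> has_derivative (\<lambda>t. t *\<^sub>R (y - x))) (at s within {0..1})"
      unfolding \<gamma>_def by (auto intro!: derivative_eq_intros)
    have "(h has_derivative (\<lambda>v. gh (\<gamma> s) \<bullet> v)) (at (\<gamma> s) within \<gamma> ` {0..1})"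
      by (rule has_derivative_subset[OF hd[OF \<gamma>D[OF s]]]) (use \<gamma>D in auto)
    from diff_chain_within[OF g1 this]
    have g2: "((\<lambda>s. h (\<gamma> s)) has_derivative (\<lambda>t. t * (gh (\<gamma> s) \<bullet> (y - x)))) (at s within {0..1})"
      by (simp add: o_def)
    show ?thesis unfolding \<psi>_def \<psi>'_def
      by (rule derivative_eq_intros g2 | simp)+ (simp add: algebra_simps power2_eq_square)
  qed
  obtain \<xi> where \<xi>: "\<xi> \<in> {0..1}" and eq: "\<psi> 1 - \<psi> 0 = \<psi>' \<xi> (1 - 0)"
    using mvt_very_simple[of 0 1 \<psi> \<psi>'] der by force
  have cs: "\<bar>(gh (\<gamma> \<xi>) - gh x) \<bullet> (y - x)\<bar> \<le> norm (gh (\<gamma> \<xi>) - gh x) * norm (y - x)"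
    by (rule Cauchy_Schwarz_ineq2)
  have "sg * ((gh (\<gamma> \<xi>) - gh x) \<bullet> (y - x)) \<le> norm (gh (\<gamma> \<xi>) - gh x) * norm (y - x)"
    using sg cs by (auto simp: abs_le_iff)
  also have "\<dots> \<le> L * norm (\<gamma> \<xi> - x) * norm (y - x)"
    using lip[OF \<gamma>D x] \<xi> by (auto intro: mult_right_mono)
  also have "norm (\<gamma> \<xi> - x) = \<xi> * norm (y - x)" using \<xi> unfolding \<gamma>_def by simp
  finally have "\<psi>' \<xi> 1 \<le> 0" unfolding \<psi>'_def by (simp add: algebra_simps power2_eq_square inner_diff_left)
  then have "\<psi> 1 \<le> \<psi> 0" using eq by simp
  then show ?thesis unfolding \<psi>_def \<gamma>_def by (simp add: algebra_simps)
qed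

lemma quad_bound:
  fixes h :: "'a::real_inner \<Rightarrow> real"
  assumes D: "convex D"
    and hd: "\<And>x. x \<in> D \<Longrightarrow> (h has_derivative (\<lambda>v. gh x \<bullet> v)) (at x within D)"
    and lip: "\<And>x y. x \<in> D \<Longrightarrow> y \<in> D \<Longrightarrow> norm (gh x - gh y) \<le> L * norm (x - y)"
    and x: "x \<in> D" and y: "y \<in> D"
  shows "h y \<le> h x + gh x \<bullet> (y - x) + L / 2 * norm (y - x) ^ 2"
    and "h y \<ge> h x + gh x \<bullet> (y - x) - L / 2 * norm (y - x) ^ 2"
  using quad_bound_aux[OF D hd lip x y, of 1] quad_bound_aux[OF D hd lip x y, of "-1"] by auto

locale setting =
  fixes r :: "'a::euclidean_space \<Rightarrow> ereal" and f :: "'n::finite \<Rightarrow> 'a \<Rightarrow> real"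
    and gf :: "'n \<Rightarrow> 'a \<Rightarrow> 'a" and \<phi> :: "'a \<Rightarrow> ereal" and L \<eta> lam :: real
  assumes r_cvx: "closed_proper_convex r"
  and f_grad: "\<And>i x. x \<in> edom r \<Longrightarrow> (f i has_derivative (\<lambda>h. gf i x \<bullet> h)) (at x within edom r)"
  and f_smooth: "\<And>i x y. x \<in> edom r \<Longrightarrow> y \<in> edom r \<Longrightarrow> norm (gf i x - gf i y) \<le> L * norm (x - y)"
  and phi_def: "\<And>x. \<phi> x = ereal ((1 / real CARD('n)) * (\<Sum>i\<in>UNIV. f i x)) + r x"
  and phi_lb: "\<exists>c. \<forall>x. ereal c \<le> \<phi> x"
  and L_pos: "L > 0"
  and eta_pos: "\<eta> > 0"
  and lam_pos: "lam > 0"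
  and eta_le: "\<eta> \<le> lam"
  and lam_le: "lam \<le> 1 / (4 * L)"
begin

abbreviation "D \<equiv> edom r"
definition "R x = real_of_ereal (r x)"
definition "Fb x = (1 / real CARD('n)) * (\<Sum>i\<in>UNIV. f i x)"
definition "gF x = (1 / real CARD('n)) *\<^sub>R (\<Sum>i\<in>UNIV. gf i x)"


lemma lamL: "lam * L \<le> 1 / 4"
  using lam_le L_pos by (simp add: field_simps)

lemma etaL: "\<eta> * L \<le> 1 / 4"
  using lamL eta_le L_pos by (meson dual_order.trans mult_right_mono less_imp_le)

lemma D_convex: "convex D" by (rule cpc_convex_dom[OF r_cvx])

lemma rR: "x \<in> D \<Longrightarrow> r x = ereal (R x)"
  unfolding R_def by (rule cpc_real[OF r_cvx])

lemma r_inf: "x \<notin> D \<Longrightarrow> r x = \<infinity>"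
  unfolding edom_def by (simp add: top.not_eq_extremum)

lemma phi_D: "x \<in> D \<Longrightarrow> \<phi> x = ereal (Fb x + R x)"
  unfolding phi_def Fb_def by (subst rR) auto

lemma phi_notD: "x \<notin> D \<Longrightarrow> \<phi> x = \<infinity>"
  unfolding phi_def by (simp add: r_inf)

lemma obtain_c: obtains c where "\<And>x. x \<in> D \<Longrightarrow> c \<le> Fb x + R x"
proof -
  obtain c where c: "\<And>x. ereal c \<le> \<phi> x" using phi_lb by auto
  have "c \<le> Fb x + R x" if "x \<in> D" for x
  proof -
    have "ereal c \<le> ereal (Fb x + R x)" using c[of x] phi_D[OF that] by simp
    then show ?thesis by simp
  qed
  then show ?thesis by (rule that)
qed

lemma gF_lip: assumes "x \<in> D" "y \<in> D" shows "norm (gF x - gF y) \<le> L * norm (x - y)"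
proof -
  have "gF x - gF y = (1 / real CARD('n)) *\<^sub>R (\<Sum>i\<in>UNIV. gf i x - gf i y)"
    unfolding gF_def by (simp add: sum_subtractf scaleR_diff_right)
  then have "norm (gF x - gF y) = (1 / real CARD('n)) * norm (\<Sum>i\<in>UNIV. gf i x - gf i y)" by simp
  also have "\<dots> \<le> (1 / real CARD('n)) * (\<Sum>i\<in>UNIV. norm (gf i x - gf i y))"
    by (intro mult_left_mono norm_sum) auto
  also have "\<dots> \<le> (1 / real CARD('n)) * (\<Sum>i\<in>(UNIV::'n set). L * norm (x - y))"
    by (intro mult_left_mono sum_mono f_smooth assms) auto
  also have "\<dots> = L * norm (x - y)" by simp
  finally show ?thesis .
qed

lemma Fb_quad_abs: assumes x: "x \<in> D" and y: "y \<in> D"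
  shows "\<bar>Fb y - Fb x - gF x \<bullet> (y - x)\<bar> \<le> L / 2 * norm (y - x) ^ 2"
proof -
  have each: "\<bar>f i y - f i x - gf i x \<bullet> (y - x)\<bar> \<le> L / 2 * norm (y - x) ^ 2" for i
    using quad_bound[OF D_convex f_grad f_smooth x y, of i] by (intro abs_leI) linarith+
  have "Fb y - Fb x - gF x \<bullet> (y - x) = (1 / real CARD('n)) * (\<Sum>i\<in>UNIV. f i y - f i x - gf i x \<bullet> (y - x))"
  proof -
    have s: "(\<Sum>i\<in>UNIV. f i y - f i x - gf i x \<bullet> (y - x)) = (\<Sum>i\<in>UNIV. f i y) - (\<Sum>i\<in>UNIV. f i x) - (\<Sum>i\<in>UNIV. gf i x) \<bullet> (y - x)"
      by (simp add: sum_subtractf inner_sum_left)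
    show ?thesis unfolding Fb_def gF_def s by (simp add: right_diff_distrib)
  qed
  then have "\<bar>Fb y - Fb x - gF x \<bullet> (y - x)\<bar> = (1 / real CARD('n)) * \<bar>\<Sum>i\<in>UNIV. f i y - f i x - gf i x \<bullet> (y - x)\<bar>"
    by (simp add: abs_mult)
  also have "\<dots> \<le> (1 / real CARD('n)) * (\<Sum>i\<in>UNIV. \<bar>f i y - f i x - gf i x \<bullet> (y - x)\<bar>)"
    by (intro mult_left_mono sum_abs) auto
  also have "\<dots> \<le> (1 / real CARD('n)) * (\<Sum>i\<in>(UNIV::'n set). L / 2 * norm (y - x) ^ 2)"
    by (intro mult_left_mono sum_mono each) auto
  also have "\<dots> = L / 2 * norm (y - x) ^ 2" by simp
  finally show ?thesis .
qed

lemma Fb_upper: "x \<in> D \<Longrightarrow> y \<in> D \<Longrightarrow> Fb y \<le> Fb x + gF x \<bullet> (y - x) + L / 2 * norm (y - x) ^ 2"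
  using abs_le_D1[OF Fb_quad_abs[of x y]] by linarith

lemma Fb_lower: "x \<in> D \<Longrightarrow> y \<in> D \<Longrightarrow> Fb y \<ge> Fb x + gF x \<bullet> (y - x) - L / 2 * norm (y - x) ^ 2"
  using abs_le_D2[OF Fb_quad_abs[of x y]] by linarith

lemma Fb_cont: "continuous_on D Fb"
proof -
  have "continuous_on D (f i)" for i by (rule has_derivative_continuous_on[OF f_grad])
  then show ?thesis unfolding Fb_def by (intro continuous_intros) auto
qed

end

lemma norm_add_scale_sq: fixes a b :: "'b::real_inner"
  shows "norm (a + s *\<^sub>R b) ^ 2 = norm a ^ 2 + 2 * s * (a \<bullet> b) + s^2 * norm b ^ 2"
  by (simp only: power2_norm_eq_inner) (simp add: inner_add_left inner_add_right inner_commute algebra_simps power2_eq_square)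

lemma norm_diff_sq_lower: fixes x w :: "'b::real_inner" shows "norm (x - w) ^ 2 \<ge> norm x ^ 2 - 2 * (norm x * norm w)"
proof -
  have "norm (x - w) ^ 2 = norm x ^ 2 - 2 * (x \<bullet> w) + norm w ^ 2"
    by (simp add: power2_norm_eq_inner inner_diff_left inner_diff_right inner_commute)
  moreover have "x \<bullet> w \<le> norm x * norm w" by (rule norm_cauchy_schwarz)
  ultimately show ?thesis by (smt (verit) zero_le_power2)
qed

lemma norm_diff_sq_upper: fixes x p :: "'b::real_normed_vector" shows "norm (x - p) ^ 2 \<le> norm x ^ 2 + 2 * (norm x * norm p) + norm p ^ 2"
proof -
  have "norm (x - p) \<le> norm x + norm p" by (rule norm_triangle_ineq4)
  then have "norm (x - p) ^ 2 \<le> (norm x + norm p) ^ 2" by (intro power_mono) auto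
  then show ?thesis by (simp add: power2_sum)
qed

lemma vi_nonexp: fixes a b :: "'b::real_inner" assumes "(a + b) \<bullet> a \<le> 0" shows "norm a \<le> norm b"
proof -
  have "norm a ^ 2 \<le> - (b \<bullet> a)" using assms by (simp add: inner_add_left power2_norm_eq_inner)
  also have "\<dots> \<le> norm b * norm a" using norm_cauchy_schwarz[of "-b" a] by simp
  finally have "norm a * norm a \<le> norm b * norm a" by (simp add: power2_eq_square)
  then show ?thesis by (cases "a = 0") (auto simp: mult_le_cancel_right)
qed

lemma ereal_shuffle: "ereal a + z + ereal b = z + ereal (a + b)"
  by (cases z) auto

context setting begin

definition "Q w = prox_of r \<eta> w"
definition "P x = prox_of \<phi> lam x"
definition "env x = real_of_ereal (moreau \<phi> lam x)"

lemma Q_ex: "\<exists>u \<in> D. \<forall>v. r u + ereal (norm (u - w)^2 / (2 * \<eta>)) \<le> r v + ereal (norm (v - w)^2 / (2 * \<eta>))"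
proof (rule exist_min[OF r_cvx])
  show "continuous_on D (\<lambda>x. norm (x - w)^2 / (2 * \<eta>))" using eta_pos by (intro continuous_intros) auto
  show "continuous_on UNIV (\<lambda>x. norm (x - w)^2 / (2 * \<eta>))" using eta_pos by (intro continuous_intros) auto
  show "norm (x - w)^2 / (2 * \<eta>) \<le> norm (x - w)^2 / (2 * \<eta>)" for x by simp
  obtain c where c: "\<And>x. x \<in> D \<Longrightarrow> c \<le> Fb x + R x" using obtain_c by blast
  obtain p where p: "p \<in> D" using cpc_ex[OF r_cvx] by blast
  fix a
  show "bounded {x \<in> D. norm (x - w)^2 / (2 * \<eta>) + real_of_ereal (r x) \<le> a}"
  proof (rule bounded_by_quad[where \<alpha> = "1 - \<eta> * L"])
    show "1 - \<eta> * L > 0" using etaL by linarith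
    fix x assume "x \<in> {x \<in> D. norm (x - w)^2 / (2 * \<eta>) + real_of_ereal (r x) \<le> a}"
    then have xD: "x \<in> D" and xa: "norm (x - w)^2 / (2 * \<eta>) + R x \<le> a" unfolding R_def by auto
    have "norm (x - w)^2 / (2 * \<eta>) \<le> a - c + Fb p + gF p \<bullet> (x - p) + L / 2 * norm (x - p) ^ 2"
      using xa c[OF xD] Fb_upper[OF p xD] by linarith
    then have h1: "norm (x - w)^2 \<le> 2 * \<eta> * (a - c + Fb p + gF p \<bullet> (x - p) + L / 2 * norm (x - p) ^ 2)"
      using eta_pos by (simp add: pos_divide_le_eq mult.commute)
    have "gF p \<bullet> (x - p) \<le> norm (gF p) * norm (x - p)" by (rule norm_cauchy_schwarz)
    also have "\<dots> \<le> norm (gF p) * (norm x + norm p)" by (intro mult_left_mono norm_triangle_ineq4) auto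
    finally have h2: "\<eta> * (gF p \<bullet> (x - p)) \<le> \<eta> * (norm (gF p) * (norm x + norm p))"
      using eta_pos by (intro mult_left_mono) auto
    have h3: "\<eta> * (L * norm (x - p) ^ 2) \<le> \<eta> * (L * (norm x ^ 2 + 2 * (norm x * norm p) + norm p ^ 2))"
      using eta_pos L_pos norm_diff_sq_upper[of x p] by (intro mult_left_mono) auto
    note h4 = norm_diff_sq_lower[of x w]
    have "(1 - \<eta> * L) * norm x ^ 2 \<le> (2 * norm w + 2 * \<eta> * norm (gF p) + 2 * \<eta> * L * norm p) * norm x
            + (2 * \<eta> * (a - c + Fb p + norm (gF p) * norm p) + \<eta> * L * norm p ^ 2)"
      using h1 h2 h3 h4 by (simp add: algebra_simps)
    then show "(1 - \<eta> * L) * norm x ^ 2 \<le> (2 * norm w + 2 * \<eta> * norm (gF p) + 2 * \<eta> * L * norm p) * norm x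
            + (2 * \<eta> * (a - c + Fb p + norm (gF p) * norm p) + \<eta> * L * norm p ^ 2)" .
  qed
qed

lemma Q_min: "Q w \<in> D" "\<And>v. r (Q w) + ereal (norm (Q w - w)^2 / (2 * \<eta>)) \<le> r v + ereal (norm (v - w)^2 / (2 * \<eta>))"
proof -
  let ?P = "\<lambda>u. \<forall>v. r u + ereal (norm (u - w)^2 / (2 * \<eta>)) \<le> r v + ereal (norm (v - w)^2 / (2 * \<eta>))"
  obtain u where "u \<in> D" "?P u" using Q_ex by blast
  then have "\<exists>u. ?P u" by blast
  then have "?P (SOME u. ?P u)" by (rule someI_ex)
  then have PQ: "?P (Q w)" unfolding Q_def prox_of_def .
  then show "\<And>v. r (Q w) + ereal (norm (Q w - w)^2 / (2 * \<eta>)) \<le> r v + ereal (norm (v - w)^2 / (2 * \<eta>))" by blast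
  have "r (Q w) + ereal (norm (Q w - w)^2 / (2 * \<eta>)) \<le> r u + ereal (norm (u - w)^2 / (2 * \<eta>))" using PQ by blast
  also have "\<dots> < \<infinity>" using rR[OF \<open>u \<in> D\<close>] by simp
  finally have "r (Q w) + ereal (norm (Q w - w)^2 / (2 * \<eta>)) < \<infinity>" .
  then show "Q w \<in> D" unfolding edom_def by (cases "r (Q w)") auto
qed

end


lemma quad_split: fixes \<eta> :: real assumes "\<eta> > 0"
  shows "(A + 2 * s * B + s^2 * C) / (2 * \<eta>) = A / (2 * \<eta>) + s * ((1 / \<eta>) * B) + s^2 * (C / (2 * \<eta>))"
  using assms by (simp add: field_simps)

context setting begin

lemma phi_shuffle: "\<phi> v + ereal b = r v + ereal (Fb v + b)"
  unfolding phi_def Fb_def by (rule ereal_shuffle)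

lemma P_ex: "\<exists>u \<in> D. \<forall>v. r u + ereal (Fb u + norm (u - x)^2 / (2 * lam)) \<le> r v + ereal (Fb v + norm (v - x)^2 / (2 * lam))"
proof -
  obtain c where c: "\<And>x. x \<in> D \<Longrightarrow> c \<le> Fb x + R x" using obtain_c by blast
  obtain p where p: "p \<in> D" using cpc_ex[OF r_cvx] by blast
  show ?thesis
  proof (rule exist_min[OF r_cvx, where \<psi> = "\<lambda>y. Fb p + gF p \<bullet> (y - p) - L / 2 * norm (y - p) ^ 2 + norm (y - x)^2 / (2 * lam)"])
    show "continuous_on D (\<lambda>y. Fb y + norm (y - x)^2 / (2 * lam))"
      using lam_pos by (intro continuous_intros Fb_cont) auto
    show "continuous_on UNIV (\<lambda>y. Fb p + gF p \<bullet> (y - p) - L / 2 * norm (y - p) ^ 2 + norm (y - x)^2 / (2 * lam))"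
      using lam_pos by (intro continuous_intros) auto
    show "Fb p + gF p \<bullet> (y - p) - L / 2 * norm (y - p) ^ 2 + norm (y - x)^2 / (2 * lam) \<le> Fb y + norm (y - x)^2 / (2 * lam)"
      if "y \<in> D" for y using Fb_lower[OF p that] by linarith
    fix a
    show "bounded {y \<in> D. Fb y + norm (y - x)^2 / (2 * lam) + real_of_ereal (r y) \<le> a}"
    proof (rule bounded_by_quad[where \<alpha> = 1])
      fix y assume "y \<in> {y \<in> D. Fb y + norm (y - x)^2 / (2 * lam) + real_of_ereal (r y) \<le> a}"
      then have yD: "y \<in> D" and ya: "Fb y + norm (y - x)^2 / (2 * lam) + R y \<le> a" unfolding R_def by auto
      have "norm (y - x)^2 / (2 * lam) \<le> a - c" using ya c[OF yD] by linarith
      then have "norm (y - x)^2 \<le> 2 * lam * (a - c)" using lam_pos by (simp add: pos_divide_le_eq mult.commute)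
      then show "1 * norm y ^ 2 \<le> (2 * norm x) * norm y + 2 * lam * (a - c)"
        using norm_diff_sq_lower[of y x] by (simp add: algebra_simps)
    qed simp
  qed
qed

lemma P_min: "P x \<in> D" "\<And>v. \<phi> (P x) + ereal (norm (P x - x)^2 / (2 * lam)) \<le> \<phi> v + ereal (norm (v - x)^2 / (2 * lam))"
proof -
  let ?P = "\<lambda>u. \<forall>v. \<phi> u + ereal (norm (u - x)^2 / (2 * lam)) \<le> \<phi> v + ereal (norm (v - x)^2 / (2 * lam))"
  obtain u where uD: "u \<in> D" and u: "\<forall>v. r u + ereal (Fb u + norm (u - x)^2 / (2 * lam)) \<le> r v + ereal (Fb v + norm (v - x)^2 / (2 * lam))"
    using P_ex by blast
  then have "?P u" unfolding phi_shuffle by blast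
  then have "\<exists>u. ?P u" by blast
  then have "?P (SOME u. ?P u)" by (rule someI_ex)
  then have PP: "?P (P x)" unfolding P_def prox_of_def .
  then show "\<And>v. \<phi> (P x) + ereal (norm (P x - x)^2 / (2 * lam)) \<le> \<phi> v + ereal (norm (v - x)^2 / (2 * lam))" by blast
  have "\<phi> (P x) + ereal (norm (P x - x)^2 / (2 * lam)) \<le> \<phi> u + ereal (norm (u - x)^2 / (2 * lam))" using PP by blast
  also have "\<dots> < \<infinity>" using phi_D[OF uD] by simp
  finally have "\<phi> (P x) + ereal (norm (P x - x)^2 / (2 * lam)) < \<infinity>" .
  then have "\<phi> (P x) \<noteq> \<infinity>" by auto
  then show "P x \<in> D" using phi_notD by blast
qed

lemma P_min_r: "r (P x) + ereal (Fb (P x) + norm (P x - x)^2 / (2 * lam)) \<le> r v + ereal (Fb v + norm (v - x)^2 / (2 * lam))"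
  using P_min(2)[of x v] unfolding phi_shuffle .

lemma moreau_eq: "moreau \<phi> lam x = \<phi> (P x) + ereal (norm (P x - x)^2 / (2 * lam))"
  unfolding moreau_def
proof (rule antisym)
  show "(INF y. \<phi> y + ereal (norm (y - x)^2 / (2 * lam))) \<le> \<phi> (P x) + ereal (norm (P x - x)^2 / (2 * lam))"
    by (rule INF_lower) simp
  show "\<phi> (P x) + ereal (norm (P x - x)^2 / (2 * lam)) \<le> (INF y. \<phi> y + ereal (norm (y - x)^2 / (2 * lam)))"
    by (rule INF_greatest) (rule P_min(2))
qed

lemma env_eq: "env x = Fb (P x) + R (P x) + norm (P x - x)^2 / (2 * lam)"
  unfolding env_def moreau_eq phi_D[OF P_min(1)] by simp

lemma env_le: assumes "y \<in> D" shows "env x \<le> Fb y + R y + norm (y - x)^2 / (2 * lam)"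
proof -
  have "ereal (env x) = \<phi> (P x) + ereal (norm (P x - x)^2 / (2 * lam))"
    unfolding env_def moreau_eq phi_D[OF P_min(1)] by simp
  also have "\<dots> \<le> \<phi> y + ereal (norm (y - x)^2 / (2 * lam))" by (rule P_min(2))
  also have "\<dots> = ereal (Fb y + R y + norm (y - x)^2 / (2 * lam))" using phi_D[OF assms] by simp
  finally show ?thesis by simp
qed

lemma Q_VI: assumes vD: "v \<in> D"
  shows "R v \<ge> R (Q w) - ((1 / \<eta>) *\<^sub>R (Q w - w)) \<bullet> (v - Q w)"
  unfolding R_def
proof (rule min_VI[OF r_cvx Q_min(1) Q_min(2) _ vD, where K = "\<lambda>v. norm (v - Q w)^2 / (2 * \<eta>)"])
  fix v and s :: real
  have "norm (Q w + s *\<^sub>R (v - Q w) - w)^2 = norm ((Q w - w) + s *\<^sub>R (v - Q w))^2" by (simp add: algebra_simps)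
  also have "\<dots> = norm (Q w - w) ^ 2 + 2 * s * ((Q w - w) \<bullet> (v - Q w)) + s^2 * norm (v - Q w) ^ 2"
    by (rule norm_add_scale_sq)
  finally have eq: "norm (Q w + s *\<^sub>R (v - Q w) - w)^2 = norm (Q w - w) ^ 2 + 2 * s * ((Q w - w) \<bullet> (v - Q w)) + s^2 * norm (v - Q w) ^ 2" .
  show "norm (Q w + s *\<^sub>R (v - Q w) - w)^2 / (2 * \<eta>) \<le> norm (Q w - w)^2 / (2 * \<eta>)
      + s * (((1 / \<eta>) *\<^sub>R (Q w - w)) \<bullet> (v - Q w)) + s^2 * (norm (v - Q w)^2 / (2 * \<eta>))"
    unfolding eq inner_scaleR_left using quad_split[OF eta_pos] by simp
qed

lemma P_VI: assumes vD: "v \<in> D"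
  shows "R v \<ge> R (P x) - (gF (P x) + (1 / lam) *\<^sub>R (P x - x)) \<bullet> (v - P x)"
  unfolding R_def
proof (rule min_VI[OF r_cvx P_min(1) P_min_r _ vD, where K = "\<lambda>v. (L / 2 + 1 / (2 * lam)) * norm (v - P x)^2"])
  fix v and s :: real assume vD: "v \<in> D" and s0: "0 < s" and s1: "s \<le> 1"
  let ?u = "P x"
  have yD: "?u + s *\<^sub>R (v - ?u) \<in> D"
  proof -
    have "?u + s *\<^sub>R (v - ?u) = (1 - s) *\<^sub>R ?u + s *\<^sub>R v" by (simp add: algebra_simps)
    then show ?thesis using D_convex P_min(1)[of x] vD s0 s1 by (simp add: convex_def)
  qed
  have f0: "Fb (?u + s *\<^sub>R (v - ?u)) \<le> Fb ?u + gF ?u \<bullet> (?u + s *\<^sub>R (v - ?u) - ?u) + L / 2 * norm (?u + s *\<^sub>R (v - ?u) - ?u)^2"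
    by (rule Fb_upper[OF P_min(1)[of x] yD])
  have n2: "norm (s *\<^sub>R (v - ?u))^2 = s^2 * norm (v - ?u)^2" by (simp add: power_mult_distrib)
  have f1: "Fb (?u + s *\<^sub>R (v - ?u)) \<le> Fb ?u + s * (gF ?u \<bullet> (v - ?u)) + s^2 * (L / 2 * norm (v - ?u)^2)"
    using f0 n2 by (simp add: algebra_simps)
  have "norm (?u + s *\<^sub>R (v - ?u) - x)^2 = norm ((?u - x) + s *\<^sub>R (v - ?u))^2" by (simp add: algebra_simps)
  also have "\<dots> = norm (?u - x) ^ 2 + 2 * s * ((?u - x) \<bullet> (v - ?u)) + s^2 * norm (v - ?u) ^ 2"
    by (rule norm_add_scale_sq)
  finally have eq: "norm (?u + s *\<^sub>R (v - ?u) - x)^2 = norm (?u - x) ^ 2 + 2 * s * ((?u - x) \<bullet> (v - ?u)) + s^2 * norm (v - ?u) ^ 2" .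
  have f2: "norm (?u + s *\<^sub>R (v - ?u) - x)^2 / (2 * lam) = norm (?u - x)^2 / (2 * lam)
      + s * (((1 / lam) *\<^sub>R (?u - x)) \<bullet> (v - ?u)) + s^2 * (norm (v - ?u)^2 / (2 * lam))"
    unfolding eq inner_scaleR_left using quad_split[OF lam_pos] by simp
  show "Fb (?u + s *\<^sub>R (v - ?u)) + norm (?u + s *\<^sub>R (v - ?u) - x)^2 / (2 * lam)
     \<le> Fb ?u + norm (?u - x)^2 / (2 * lam) + s * ((gF ?u + (1 / lam) *\<^sub>R (?u - x)) \<bullet> (v - ?u))
       + s^2 * ((L / 2 + 1 / (2 * lam)) * norm (v - ?u)^2)"
    using f1 f2 by (simp add: inner_add_left algebra_simps)
qed

lemma P_lip: "norm (P x - P x') \<le> 4 / 3 * norm (x - x')"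
proof -
  define u where "u = P x"
  define u' where "u' = P x'"
  define d where "d = gF u + (1 / lam) *\<^sub>R (u - x)"
  define d' where "d' = gF u' + (1 / lam) *\<^sub>R (u' - x')"
  define \<delta> where "\<delta> = u - u'"
  have uD: "u \<in> D" and u'D: "u' \<in> D" unfolding u_def u'_def by (rule P_min(1))+
  have v1: "R u' \<ge> R u - d \<bullet> (u' - u)" unfolding u_def u'_def d_def by (rule P_VI[OF P_min(1)])
  have v2: "R u \<ge> R u' - d' \<bullet> (u - u')" unfolding u_def u'_def d'_def by (rule P_VI[OF P_min(1)])
  have "d \<bullet> (u' - u) = - (d \<bullet> \<delta>)" unfolding \<delta>_def by (simp add: inner_diff_right)
  then have e: "d \<bullet> \<delta> - d' \<bullet> \<delta> \<le> 0" using v1 v2 unfolding \<delta>_def by linarith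
  have "d \<bullet> \<delta> - d' \<bullet> \<delta> = (gF u - gF u') \<bullet> \<delta> + (1 / lam) * (\<delta> \<bullet> \<delta>) - (1 / lam) * ((x - x') \<bullet> \<delta>)"
    unfolding d_def d'_def \<delta>_def by (simp add: inner_add_left inner_diff_left algebra_simps)
  then have e2: "(1 / lam) * (\<delta> \<bullet> \<delta>) \<le> (1 / lam) * ((x - x') \<bullet> \<delta>) - (gF u - gF u') \<bullet> \<delta>" using e by linarith
  have "- ((gF u - gF u') \<bullet> \<delta>) = (gF u' - gF u) \<bullet> \<delta>" by (simp add: inner_diff_left)
  also have "\<dots> \<le> norm (gF u' - gF u) * norm \<delta>" by (rule norm_cauchy_schwarz)
  also have "norm (gF u' - gF u) = norm (gF u - gF u')" by (rule norm_minus_commute)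
  finally have "- ((gF u - gF u') \<bullet> \<delta>) \<le> norm (gF u - gF u') * norm \<delta>" .
  also have "\<dots> \<le> L * norm \<delta> * norm \<delta>" unfolding \<delta>_def using gF_lip[OF uD u'D] by (intro mult_right_mono) auto
  finally have c1: "- ((gF u - gF u') \<bullet> \<delta>) \<le> L * norm \<delta> * norm \<delta>" .
  have c2: "(1 / lam) * ((x - x') \<bullet> \<delta>) \<le> (1 / lam) * (norm (x - x') * norm \<delta>)"
    using lam_pos norm_cauchy_schwarz[of "x - x'" \<delta>] by (intro mult_left_mono) auto
  have "(1 / lam) * (norm \<delta> * norm \<delta>) \<le> (1 / lam) * (norm (x - x') * norm \<delta>) + L * norm \<delta> * norm \<delta>"
    using e2 c1 c2 by (simp add: dot_square_norm power2_eq_square)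
  then have "lam * ((1 / lam) * (norm \<delta> * norm \<delta>)) \<le> lam * ((1 / lam) * (norm (x - x') * norm \<delta>) + L * norm \<delta> * norm \<delta>)"
    using lam_pos by (intro mult_left_mono) auto
  then have e3: "norm \<delta> * norm \<delta> \<le> norm (x - x') * norm \<delta> + (lam * L) * (norm \<delta> * norm \<delta>)"
    using lam_pos by (simp add: algebra_simps)
  have "(lam * L) * (norm \<delta> * norm \<delta>) \<le> (1 / 4) * (norm \<delta> * norm \<delta>)"
    using lamL by (intro mult_right_mono) auto
  then have "(3 / 4 * norm \<delta>) * norm \<delta> \<le> norm (x - x') * norm \<delta>" using e3 by linarith
  then have "3 / 4 * norm \<delta> \<le> norm (x - x')" by (cases "\<delta> = 0") (auto simp: mult_le_cancel_right)
  then show ?thesis unfolding \<delta>_def u_def u'_def by linarith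
qed

lemma Q_nonexp: "norm (Q w - Q w') \<le> norm (w - w')"
proof -
  define u where "u = Q w"
  define u' where "u' = Q w'"
  have uD: "u \<in> D" and u'D: "u' \<in> D" unfolding u_def u'_def by (rule Q_min(1))+
  have v1: "R u' \<ge> R u - ((1 / \<eta>) *\<^sub>R (u - w)) \<bullet> (u' - u)" unfolding u_def u'_def by (rule Q_VI[OF Q_min(1)])
  have v2: "R u \<ge> R u' - ((1 / \<eta>) *\<^sub>R (u' - w')) \<bullet> (u - u')" unfolding u_def u'_def by (rule Q_VI[OF Q_min(1)])
  have "(1 / \<eta>) * (((u - u') + (w' - w)) \<bullet> (u - u')) \<le> 0"
    using v1 v2 by (simp add: inner_add_left inner_diff_left inner_diff_right algebra_simps)
  then have "((u - u') + (w' - w)) \<bullet> (u - u') \<le> 0" using eta_pos by (auto simp: divide_le_0_iff)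
  from vi_nonexp[OF this] show ?thesis unfolding u_def u'_def by (simp add: norm_minus_commute)
qed

lemma PQ_comp: "norm (P x - Q w) \<le> norm (w - (P x - \<eta> *\<^sub>R (gF (P x) + (1 / lam) *\<^sub>R (P x - x))))"
proof -
  define u where "u = P x"
  define z where "z = Q w"
  define d where "d = gF u + (1 / lam) *\<^sub>R (u - x)"
  have uD: "u \<in> D" and zD: "z \<in> D" unfolding u_def z_def by (rule P_min(1) Q_min(1))+
  have v1: "R z \<ge> R u - d \<bullet> (z - u)" unfolding u_def z_def d_def by (rule P_VI[OF Q_min(1)])
  have v2: "R u \<ge> R z - ((1 / \<eta>) *\<^sub>R (z - w)) \<bullet> (u - z)" unfolding u_def z_def by (rule Q_VI[OF P_min(1)])
  have "(1 / \<eta>) * (((u - z) + (w - (u - \<eta> *\<^sub>R d))) \<bullet> (u - z)) \<le> 0"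
    using v1 v2 eta_pos by (simp add: inner_add_left inner_diff_left inner_diff_right algebra_simps)
  then have "((u - z) + (w - (u - \<eta> *\<^sub>R d))) \<bullet> (u - z) \<le> 0" using eta_pos by (auto simp: divide_le_0_iff)
  from vi_nonexp[OF this] show ?thesis unfolding u_def z_def d_def .
qed

end

lemma step_scalar:
  fixes \<eta> lam L \<kappa> il na nd ny ne nac ng nv nedg ndg ae ad ag ay acy cy edg :: real
  assumes eta: "\<eta> > 0" and lam: "lam > 0" and il: "il * lam = 1" and el: "\<eta> \<le> lam" and L: "L \<ge> 0"
    and lamL: "lam * L \<le> 1 / 4" and k: "\<kappa> = 1 - \<eta> * il"
    and na: "na \<ge> 0"
    and F2: "- 2 * ad \<le> il * na + lam * nd"
    and F3: "- ag \<le> L * na"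
    and F4a: "ay = acy + cy" and F4: "- 2 * \<eta> * acy \<le> nac + \<eta>^2 * ny"
    and F5a: "nv \<le> 2 * nedg + 2 * ny" and F5b: "nedg = ne + 2 * edg + ndg"
    and F5c: "ndg \<le> 2 * nd + 2 * ng" and F5d: "ng \<le> L^2 * na"
  shows "\<kappa>^2 * na - 2 * \<eta> * \<kappa> * (ae + ad + ag + ay) + \<eta>^2 * nv - na
    \<le> - (\<eta> * il / 2) * na + \<kappa> * nac + (\<eta> * \<kappa> * lam + 4 * \<eta>^2) * nd + (\<kappa> * \<eta>^2 + 2 * \<eta>^2) * ny
       - 2 * \<eta> * \<kappa> * cy - 2 * \<eta> * \<kappa> * ae + 4 * \<eta>^2 * edg + 2 * \<eta>^2 * ne"
proof -
  define \<rho> where "\<rho> = \<eta> * il"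
  have il0: "il > 0" using il lam by (metis mult_pos_pos zero_less_mult_pos2 zero_less_one)
  have "\<eta> * il \<le> lam * il" using el il0 by (simp add: mult_right_mono)
  then have r1: "\<rho> \<le> 1" unfolding \<rho>_def using il by (simp add: mult.commute)
  have r0: "\<rho> > 0" unfolding \<rho>_def using eta il0 by simp
  have k0: "\<kappa> \<ge> 0" and k1: "\<kappa> \<le> 1" using k r1 r0 unfolding \<rho>_def by auto
  have etaeq: "\<eta> = \<rho> * lam" unfolding \<rho>_def using il by (simp add: mult.assoc)
  have eL: "\<eta> * L \<le> \<rho> / 4"
  proof -
    have "\<eta> * L = \<rho> * (lam * L)" using etaeq by simp
    also have "\<dots> \<le> \<rho> * (1 / 4)" using r0 lamL by (intro mult_left_mono) auto
    finally show ?thesis by simp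
  qed
  have eL0: "\<eta> * L \<ge> 0" using eta L by simp
  have S2: "- 2 * \<eta> * \<kappa> * ad \<le> \<eta> * \<kappa> * il * na + \<eta> * \<kappa> * lam * nd"
    using mult_left_mono[OF F2, of "\<eta> * \<kappa>"] eta k0 by (simp add: algebra_simps)
  have S3: "- 2 * \<eta> * \<kappa> * ag \<le> 2 * \<kappa> * (\<eta> * L) * na"
    using mult_left_mono[OF F3, of "2 * \<eta> * \<kappa>"] eta k0 by (simp add: algebra_simps)
  have S4: "- 2 * \<eta> * \<kappa> * acy \<le> \<kappa> * nac + \<kappa> * \<eta>^2 * ny"
    using mult_left_mono[OF F4, of "\<kappa>"] k0 by (simp add: algebra_simps)
  have nvb: "nv \<le> 2 * ne + 4 * edg + 4 * nd + 4 * L^2 * na + 2 * ny" using F5a F5b F5c F5d by linarith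
  have S5: "\<eta>^2 * nv \<le> 2 * \<eta>^2 * ne + 4 * \<eta>^2 * edg + 4 * \<eta>^2 * nd + 4 * (\<eta> * L)^2 * na + 2 * \<eta>^2 * ny"
    using mult_left_mono[OF nvb, of "\<eta>^2"] by (simp add: algebra_simps power_mult_distrib)
  have C1: "2 * \<kappa> * (\<eta> * L) \<le> 2 * \<kappa> * (\<rho> / 4)" using eL k0 by (intro mult_left_mono) auto
  have C2: "(\<eta> * L)^2 \<le> (\<rho> / 4)^2" using eL eL0 by (intro power_mono) auto
  have C: "\<kappa>^2 + \<eta> * \<kappa> * il + 2 * \<kappa> * (\<eta> * L) + 4 * (\<eta> * L)^2 - 1 \<le> - (\<rho> / 2)"
  proof -
    have "\<kappa>^2 + \<eta> * \<kappa> * il - 1 = - \<rho>" unfolding k \<rho>_def by (simp add: algebra_simps power2_eq_square)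
    moreover have "2 * \<kappa> * (\<rho> / 4) + 4 * (\<rho> / 4)^2 = \<rho> / 2 - \<rho>^2 / 4"
      unfolding k \<rho>_def[symmetric] by (simp add: algebra_simps power2_eq_square)
    moreover have "\<rho>^2 \<ge> 0" by simp
    ultimately show ?thesis using C1 C2 by linarith
  qed
  have SC: "(\<kappa>^2 + \<eta> * \<kappa> * il + 2 * \<kappa> * (\<eta> * L) + 4 * (\<eta> * L)^2 - 1) * na \<le> - (\<rho> / 2) * na"
    using mult_right_mono[OF C na] .
  show ?thesis unfolding F4a
    using S2 S3 S4 S5 SC unfolding \<rho>_def by (simp add: algebra_simps) 
qed
lemma norm_add_sq_le: fixes p q :: "'b::real_inner" shows "norm (p + q)^2 \<le> 2 * norm p ^ 2 + 2 * norm q ^ 2"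
proof -
  have "0 \<le> norm (p - q)^2" by simp
  moreover have "norm (p - q)^2 = norm p ^ 2 - 2 * (p \<bullet> q) + norm q ^ 2"
    by (simp add: power2_norm_eq_inner inner_diff_left inner_diff_right inner_commute)
  moreover have "norm (p + q)^2 = norm p ^ 2 + 2 * (p \<bullet> q) + norm q ^ 2"
    by (simp add: power2_norm_eq_inner inner_add_left inner_add_right inner_commute)
  ultimately show ?thesis by linarith
qed

lemma norm_add_sq_eq: fixes p q :: "'b::real_inner" shows "norm (p + q)^2 = norm p ^ 2 + 2 * (p \<bullet> q) + norm q ^ 2"
  by (simp add: power2_norm_eq_inner inner_add_left inner_add_right inner_commute)

lemma step_vec:
  fixes a e \<delta> \<gamma> yp c :: "'b::real_inner" and \<eta> lam L \<kappa> :: real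
  assumes eta: "\<eta> > 0" and lam: "lam > 0" and el: "\<eta> \<le> lam" and L: "L \<ge> 0"
    and lamL: "lam * L \<le> 1 / 4" and k: "\<kappa> = 1 - \<eta> / lam" and g: "norm \<gamma> \<le> L * norm a"
  shows "norm (\<kappa> *\<^sub>R a - \<eta> *\<^sub>R (e + \<delta> + \<gamma> + yp))^2 - norm a ^ 2
    \<le> - (\<eta> / (2 * lam)) * norm a ^ 2 + \<kappa> * norm (a - c)^2 + (\<eta> * \<kappa> * lam + 4 * \<eta>^2) * norm \<delta> ^ 2
       + (\<kappa> * \<eta>^2 + 2 * \<eta>^2) * norm yp ^ 2
       - 2 * \<eta> * \<kappa> * (c \<bullet> yp) - 2 * \<eta> * \<kappa> * (a \<bullet> e) + 4 * \<eta>^2 * (e \<bullet> (\<delta> + \<gamma>)) + 2 * \<eta>^2 * norm e ^ 2"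
proof -
  define v where "v = e + \<delta> + \<gamma> + yp"
  have il: "(1 / lam) * lam = 1" using lam by simp
  have k': "\<kappa> = 1 - \<eta> * (1 / lam)" using k by simp
  have E1: "norm (\<kappa> *\<^sub>R a - \<eta> *\<^sub>R v)^2 = \<kappa>^2 * norm a ^ 2 - 2 * \<eta> * \<kappa> * (a \<bullet> e + a \<bullet> \<delta> + a \<bullet> \<gamma> + a \<bullet> yp) + \<eta>^2 * norm v ^ 2"
    unfolding v_def by (simp only: power2_norm_eq_inner) (simp add: inner_diff_left inner_diff_right inner_add_left inner_add_right inner_commute algebra_simps power2_eq_square)
  have F2: "- 2 * (a \<bullet> \<delta>) \<le> (1 / lam) * norm a ^ 2 + lam * norm \<delta> ^ 2"
  proof -
    have "0 \<le> norm (a + lam *\<^sub>R \<delta>)^2" by simp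
    also have "\<dots> = norm a ^ 2 + 2 * lam * (a \<bullet> \<delta>) + lam^2 * norm \<delta> ^ 2" by (rule norm_add_scale_sq)
    finally have "0 \<le> (1 / lam) * (norm a ^ 2 + 2 * lam * (a \<bullet> \<delta>) + lam^2 * norm \<delta> ^ 2)" using lam by simp
    then show ?thesis using lam by (simp add: algebra_simps power2_eq_square)
  qed
  have F3: "- (a \<bullet> \<gamma>) \<le> L * norm a ^ 2"
  proof -
    have "- (a \<bullet> \<gamma>) \<le> norm a * norm \<gamma>" using norm_cauchy_schwarz[of a "-\<gamma>"] by simp
    also have "\<dots> \<le> norm a * (L * norm a)" by (intro mult_left_mono g) auto
    finally show ?thesis by (simp add: power2_eq_square algebra_simps)
  qed
  have F4a: "a \<bullet> yp = (a - c) \<bullet> yp + c \<bullet> yp" by (simp add: inner_diff_left)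
  have F4: "- 2 * \<eta> * ((a - c) \<bullet> yp) \<le> norm (a - c)^2 + \<eta>^2 * norm yp ^ 2"
  proof -
    have "0 \<le> norm ((a - c) + \<eta> *\<^sub>R yp)^2" by simp
    also have "\<dots> = norm (a - c) ^ 2 + 2 * \<eta> * ((a - c) \<bullet> yp) + \<eta>^2 * norm yp ^ 2" by (rule norm_add_scale_sq)
    finally show ?thesis by linarith
  qed
  have F5a: "norm v ^ 2 \<le> 2 * norm (e + \<delta> + \<gamma>) ^ 2 + 2 * norm yp ^ 2"
    unfolding v_def by (rule norm_add_sq_le)
  have F5b: "norm (e + \<delta> + \<gamma>) ^ 2 = norm e ^ 2 + 2 * (e \<bullet> (\<delta> + \<gamma>)) + norm (\<delta> + \<gamma>) ^ 2"
    using norm_add_sq_eq[of e "\<delta> + \<gamma>"] by (simp add: add.assoc)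
  have F5c: "norm (\<delta> + \<gamma>) ^ 2 \<le> 2 * norm \<delta> ^ 2 + 2 * norm \<gamma> ^ 2" by (rule norm_add_sq_le)
  have F5d: "norm \<gamma> ^ 2 \<le> L^2 * norm a ^ 2"
    using power_mono[OF g, of 2] by (simp add: power_mult_distrib)
  have na: "norm a ^ 2 \<ge> 0" by simp
  from step_scalar[OF eta lam il el L lamL k' na F2 F3 F4a F4 F5a F5b F5c F5d, of "a \<bullet> e"]
  show ?thesis unfolding E1[unfolded v_def] v_def by (simp add: field_simps)
qed

lemma var_id:
  fixes u :: "'i \<Rightarrow> 'b::real_inner"
  assumes I: "finite I" and w1: "sum w I = 1"
  shows "(\<Sum>j\<in>I. w j * norm (u j - c)^2) = (\<Sum>j\<in>I. w j * norm (u j - (\<Sum>k\<in>I. w k *\<^sub>R u k))^2) + norm ((\<Sum>k\<in>I. w k *\<^sub>R u k) - c)^2"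
proof -
  define ub where "ub = (\<Sum>k\<in>I. w k *\<^sub>R u k)"
  have eq: "norm (u j - c)^2 = norm (u j - ub)^2 + 2 * ((u j - ub) \<bullet> (ub - c)) + norm (ub - c)^2" for j
    using norm_add_sq_eq[of "u j - ub" "ub - c"] by simp
  have "(\<Sum>j\<in>I. w j * ((u j - ub) \<bullet> (ub - c))) = (\<Sum>j\<in>I. w j *\<^sub>R (u j - ub)) \<bullet> (ub - c)"
    by (simp add: inner_sum_left)
  also have "(\<Sum>j\<in>I. w j *\<^sub>R (u j - ub)) = ub - (\<Sum>j\<in>I. w j) *\<^sub>R ub"
    unfolding ub_def by (simp add: scaleR_diff_right sum_subtractf scaleR_sum_left)
  also have "\<dots> = 0" using w1 by simp
  finally have z: "(\<Sum>j\<in>I. w j * ((u j - ub) \<bullet> (ub - c))) = 0" by simp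
  have eq2: "w j * norm (u j - c)^2 = w j * norm (u j - ub)^2 + 2 * (w j * ((u j - ub) \<bullet> (ub - c))) + w j * norm (ub - c)^2" for j
    by (subst eq) (simp only: ring_distribs mult.left_commute)
  have "(\<Sum>j\<in>I. w j * norm (u j - c)^2) = (\<Sum>j\<in>I. w j * norm (u j - ub)^2) + 2 * (\<Sum>j\<in>I. w j * ((u j - ub) \<bullet> (ub - c))) + (\<Sum>j\<in>I. w j) * norm (ub - c)^2"
    unfolding eq2 by (simp only: sum.distrib sum_distrib_left sum_distrib_right)
  then show ?thesis using z w1 unfolding ub_def by simp
qed

lemma var_le:
  fixes u :: "'i \<Rightarrow> 'b::real_inner"
  assumes I: "finite I" and w1: "sum w I = 1" and w0: "\<And>j. j \<in> I \<Longrightarrow> w j \<ge> 0"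
  shows "(\<Sum>j\<in>I. w j * norm (u j - (\<Sum>k\<in>I. w k *\<^sub>R u k))^2) \<le> (\<Sum>j\<in>I. w j * norm (u j - c)^2)"
  using var_id[OF I w1, of u c] by simp

lemma jensen_sq:
  fixes u :: "'i \<Rightarrow> 'b::real_inner"
  assumes I: "finite I" and w1: "sum w I = 1" and w0: "\<And>j. j \<in> I \<Longrightarrow> w j \<ge> 0"
  shows "norm (\<Sum>k\<in>I. w k *\<^sub>R u k)^2 \<le> (\<Sum>j\<in>I. w j * norm (u j)^2)"
proof -
  have "0 \<le> (\<Sum>j\<in>I. w j * norm (u j - (\<Sum>k\<in>I. w k *\<^sub>R u k))^2)"
    by (intro sum_nonneg mult_nonneg_nonneg w0) auto
  then show ?thesis using var_id[OF I w1, of u 0] by simp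
qed

context setting begin

lemma Fb_weighted:
  assumes I: "finite I" and w1: "sum w I = 1" and w0: "\<And>j. j \<in> I \<Longrightarrow> w j \<ge> 0"
    and uD: "\<And>j. j \<in> I \<Longrightarrow> u j \<in> D"
  shows "Fb (\<Sum>k\<in>I. w k *\<^sub>R u k) \<le> (\<Sum>j\<in>I. w j * Fb (u j)) + L / 2 * (\<Sum>j\<in>I. w j * norm (u j - (\<Sum>k\<in>I. w k *\<^sub>R u k))^2)"
proof -
  define ub where "ub = (\<Sum>k\<in>I. w k *\<^sub>R u k)"
  have ubD: "ub \<in> D" unfolding ub_def by (rule convex_sum[OF I D_convex w1 w0 uD])
  have "w j * (Fb ub + gF ub \<bullet> (u j - ub) - L / 2 * norm (u j - ub) ^ 2) \<le> w j * Fb (u j)" if "j \<in> I" for j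
    using Fb_lower[OF ubD uD[OF that]] w0[OF that] by (intro mult_left_mono) auto
  then have "(\<Sum>j\<in>I. w j * (Fb ub + gF ub \<bullet> (u j - ub) - L / 2 * norm (u j - ub) ^ 2)) \<le> (\<Sum>j\<in>I. w j * Fb (u j))"
    by (rule sum_mono)
  moreover have "(\<Sum>j\<in>I. w j * (Fb ub + gF ub \<bullet> (u j - ub) - L / 2 * norm (u j - ub) ^ 2))
      = (\<Sum>j\<in>I. w j) * Fb ub + gF ub \<bullet> (\<Sum>j\<in>I. w j *\<^sub>R (u j - ub)) - L / 2 * (\<Sum>j\<in>I. w j * norm (u j - ub) ^ 2)"
    by (simp add: algebra_simps sum.distrib sum_subtractf sum_distrib_left sum_distrib_right inner_sum_right)
  moreover have "(\<Sum>j\<in>I. w j *\<^sub>R (u j - ub)) = 0"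
  proof -
    have "(\<Sum>j\<in>I. w j *\<^sub>R (u j - ub)) = ub - (\<Sum>j\<in>I. w j) *\<^sub>R ub"
      unfolding ub_def by (simp add: scaleR_diff_right sum_subtractf scaleR_sum_left)
    then show ?thesis using w1 by simp
  qed
  ultimately show ?thesis using w1 unfolding ub_def[symmetric] by simp
qed

end

context setting begin

definition "gb X = (1 / real CARD('n)) *\<^sub>R (\<Sum>k\<in>UNIV. gf k (X k))"
definition "Bv X = (1 / (2 * lam)) *\<^sub>R (\<Sum>j\<in>UNIV. (- (2 * \<eta> * (1 - \<eta> / lam))) *\<^sub>R (X j - P (X j))
     + (4 * \<eta>^2) *\<^sub>R ((gb X - gF (X j)) + (gF (X j) - gF (P (X j)))))"

lemma step2:
  fixes W :: "real^'n^'n" and xh Z :: "'n \<Rightarrow> 'a" and m :: 'a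
  assumes W_nonneg: "\<And>i j. W $ i $ j \<ge> 0"
    and W_rows: "\<And>i. (\<Sum>j\<in>UNIV. W $ i $ j) = 1"
    and W_cols: "\<And>j. (\<Sum>i\<in>UNIV. W $ i $ j) = 1"
    and xhD: "\<And>j. xh j \<in> D"
  shows "(\<Sum>i\<in>UNIV. env (\<Sum>j\<in>UNIV. W $ j $ i *\<^sub>R Z j))
     \<le> (\<Sum>j\<in>UNIV. Fb (xh j) + R (xh j) + norm (xh j - Z j)^2 / (2 * lam) + L / 2 * norm (xh j - m)^2)"
proof -
  define T where "T j = Fb (xh j) + R (xh j) + norm (xh j - Z j)^2 / (2 * lam) + L / 2 * norm (xh j - m)^2" for j
  have each: "env (\<Sum>j\<in>UNIV. W $ j $ i *\<^sub>R Z j) \<le> (\<Sum>j\<in>UNIV. W $ j $ i * T j)" for i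
  proof -
    define w where "w j = W $ j $ i" for j
    have w0: "w j \<ge> 0" for j unfolding w_def by (rule W_nonneg)
    have w1: "sum w UNIV = 1" unfolding w_def by (rule W_cols)
    define v where "v = (\<Sum>j\<in>UNIV. w j *\<^sub>R xh j)"
    have vD: "v \<in> D" unfolding v_def by (rule convex_sum[OF _ D_convex w1 w0 xhD]) auto
    have e1: "env (\<Sum>j\<in>UNIV. w j *\<^sub>R Z j) \<le> Fb v + R v + norm (v - (\<Sum>j\<in>UNIV. w j *\<^sub>R Z j))^2 / (2 * lam)"
      using env_le[OF vD, of "\<Sum>j\<in>UNIV. w j *\<^sub>R Z j"] by (simp add: norm_minus_commute)
    have e2: "Fb v \<le> (\<Sum>j\<in>UNIV. w j * Fb (xh j)) + L / 2 * (\<Sum>j\<in>UNIV. w j * norm (xh j - v)^2)"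
      unfolding v_def by (rule Fb_weighted[OF _ w1 w0 xhD]) auto
    have e3: "(\<Sum>j\<in>UNIV. w j * norm (xh j - v)^2) \<le> (\<Sum>j\<in>UNIV. w j * norm (xh j - m)^2)"
      unfolding v_def by (rule var_le[OF _ w1 w0]) auto
    have e3': "L / 2 * (\<Sum>j\<in>UNIV. w j * norm (xh j - v)^2) \<le> L / 2 * (\<Sum>j\<in>UNIV. w j * norm (xh j - m)^2)"
      using e3 L_pos by (intro mult_left_mono) auto
    have "r v \<le> ereal (\<Sum>j\<in>UNIV. w j * real_of_ereal (r (xh j)))"
      unfolding v_def by (rule cpc_jensen[OF r_cvx _ w0 w1 xhD]) auto
    then have e4: "R v \<le> (\<Sum>j\<in>UNIV. w j * R (xh j))" by (subst (asm) rR[OF vD]) (simp add: R_def)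
    have "v - (\<Sum>j\<in>UNIV. w j *\<^sub>R Z j) = (\<Sum>j\<in>UNIV. w j *\<^sub>R (xh j - Z j))"
      unfolding v_def by (simp add: scaleR_diff_right sum_subtractf)
    then have e5: "norm (v - (\<Sum>j\<in>UNIV. w j *\<^sub>R Z j))^2 \<le> (\<Sum>j\<in>UNIV. w j * norm (xh j - Z j)^2)"
      using jensen_sq[OF _ w1 w0, of "\<lambda>j. xh j - Z j"] by simp
    have e5': "norm (v - (\<Sum>j\<in>UNIV. w j *\<^sub>R Z j))^2 / (2 * lam) \<le> (\<Sum>j\<in>UNIV. w j * norm (xh j - Z j)^2) / (2 * lam)"
      using e5 lam_pos by (intro divide_right_mono) auto
    have "(\<Sum>j\<in>UNIV. w j * T j) = (\<Sum>j\<in>UNIV. w j * Fb (xh j)) + (\<Sum>j\<in>UNIV. w j * R (xh j))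
        + (\<Sum>j\<in>UNIV. w j * norm (xh j - Z j)^2) / (2 * lam) + L / 2 * (\<Sum>j\<in>UNIV. w j * norm (xh j - m)^2)"
      unfolding T_def by (simp add: algebra_simps sum.distrib sum_distrib_left sum_divide_distrib)
    then show ?thesis using e1 e2 e3' e4 e5' unfolding w_def by linarith
  qed
  have "(\<Sum>i\<in>UNIV. env (\<Sum>j\<in>UNIV. W $ j $ i *\<^sub>R Z j)) \<le> (\<Sum>i\<in>UNIV. \<Sum>j\<in>UNIV. W $ j $ i * T j)"
    by (rule sum_mono[OF each])
  also have "\<dots> = (\<Sum>j\<in>UNIV. (\<Sum>i\<in>UNIV. W $ j $ i) * T j)"
    by (subst sum.swap) (simp add: sum_distrib_right)
  also have "\<dots> = (\<Sum>j\<in>UNIV. T j)" using W_rows by simp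
  finally show ?thesis unfolding T_def .
qed

end


context setting begin

lemma delta_bound:
  fixes X :: "'n \<Rightarrow> 'a"
  assumes XD: "\<And>i. X i \<in> D"
  shows "(\<Sum>j\<in>UNIV. norm (gb X - gF (X j))^2) \<le> 4 * L^2 * perp_sq X"
proof -
  define N where "N = real CARD('n)"
  have N0: "N > 0" unfolding N_def by simp
  define xb where "xb = (1 / N) *\<^sub>R (\<Sum>j\<in>UNIV. X j)"
  define d where "d k = norm (X k - xb)" for k
  define A where "A = (1 / N) * (\<Sum>k\<in>UNIV. d k)"
  have d0: "d k \<ge> 0" for k unfolding d_def by simp
  have A0: "A \<ge> 0" unfolding A_def using d0 N0 by (simp add: sum_nonneg)
  have px: "perp_sq X = (\<Sum>k\<in>UNIV. d k ^ 2)" unfolding perp_sq_def d_def xb_def N_def by simp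
  have bj: "norm (gb X - gF (X j)) \<le> L * (A + d j)" for j
  proof -
    have "gb X - gF (X j) = (1 / N) *\<^sub>R (\<Sum>k\<in>UNIV. gf k (X k) - gf k (X j))"
      unfolding gb_def gF_def N_def by (simp add: sum_subtractf scaleR_diff_right)
    then have "norm (gb X - gF (X j)) = (1 / N) * norm (\<Sum>k\<in>UNIV. gf k (X k) - gf k (X j))" using N0 by simp
    also have "\<dots> \<le> (1 / N) * (\<Sum>k\<in>UNIV. norm (gf k (X k) - gf k (X j)))"
      using N0 by (intro mult_left_mono norm_sum) auto
    also have "\<dots> \<le> (1 / N) * (\<Sum>k\<in>UNIV. L * (d k + d j))"
    proof (intro mult_left_mono sum_mono)
      fix k
      have "norm (gf k (X k) - gf k (X j)) \<le> L * norm (X k - X j)" by (rule f_smooth[OF XD XD])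
      also have "norm (X k - X j) \<le> d k + d j" unfolding d_def
        using norm_triangle_ineq4[of "X k - xb" "X j - xb"] by (simp add: norm_minus_commute)
      then have "L * norm (X k - X j) \<le> L * (d k + d j)" using L_pos by (intro mult_left_mono) auto
      finally show "norm (gf k (X k) - gf k (X j)) \<le> L * (d k + d j)" .
    qed (use N0 in auto)
    also have "\<dots> = L * (A + d j)" unfolding A_def N_def
      by (simp add: sum.distrib sum_distrib_left[symmetric] algebra_simps)
    finally show ?thesis .
  qed
  have sq: "norm (gb X - gF (X j))^2 \<le> 2 * L^2 * (A^2 + d j ^ 2)" for j
  proof -
    have "norm (gb X - gF (X j))^2 \<le> (L * (A + d j))^2" using bj[of j] by (intro power_mono) auto
    also have "\<dots> = L^2 * (A + d j)^2" by (simp add: power_mult_distrib)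
    also have "\<dots> \<le> L^2 * (2 * (A^2 + d j ^ 2))"
    proof (intro mult_left_mono)
      have "0 \<le> (A - d j)^2" by simp
      then show "(A + d j)^2 \<le> 2 * (A^2 + d j ^ 2)" by (simp add: power2_eq_square algebra_simps)
    qed simp
    finally show ?thesis by (simp add: algebra_simps)
  qed
  have "(\<Sum>j\<in>UNIV. norm (gb X - gF (X j))^2) \<le> (\<Sum>j\<in>UNIV. 2 * L^2 * (A^2 + d j ^ 2))"
    by (rule sum_mono[OF sq])
  also have "\<dots> = 2 * L^2 * (N * A^2 + (\<Sum>j\<in>UNIV. d j ^ 2))"
    unfolding N_def by (simp add: sum.distrib sum_distrib_left algebra_simps)
  also have "N * A^2 \<le> (\<Sum>j\<in>UNIV. d j ^ 2)"
  proof -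
    have "(\<Sum>k\<in>UNIV. d k)^2 \<le> (\<Sum>k\<in>UNIV. d k ^ 2) * N"
      unfolding N_def by (rule sum_squared_le_sum_of_squares)
    then have "N * A^2 = (\<Sum>k\<in>UNIV. d k)^2 / N" unfolding A_def using N0 by (simp add: power2_eq_square field_simps)
    also have "\<dots> \<le> (\<Sum>k\<in>UNIV. d k ^ 2) * N / N" using \<open>(\<Sum>k\<in>UNIV. d k)^2 \<le> _\<close> N0 by (intro divide_right_mono) auto
    finally show ?thesis using N0 by simp
  qed
  then have "2 * L^2 * (N * A^2 + (\<Sum>j\<in>UNIV. d j ^ 2)) \<le> 2 * L^2 * ((\<Sum>j\<in>UNIV. d j ^ 2) + (\<Sum>j\<in>UNIV. d j ^ 2))"
    by (intro mult_left_mono) auto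
  finally show ?thesis unfolding px by simp
qed

end


context setting begin

lemma coef_fact: "50 / 9 * (1 - \<eta> / lam) + 4 * L^2 * (\<eta> * (1 - \<eta> / lam) * lam + 4 * \<eta>^2) + 16 / 9 * (lam * L) \<le> 8"
proof -
  define \<kappa> where "\<kappa> = 1 - \<eta> / lam"
  have k0: "\<kappa> \<ge> 0" and k1: "\<kappa> \<le> 1" unfolding \<kappa>_def using eta_le eta_pos lam_pos by (auto simp: field_simps)
  have lL: "lam * L \<ge> 0" using lam_pos L_pos by simp
  have a1: "\<eta> * \<kappa> \<le> lam" using k0 k1 eta_le eta_pos by (metis mult_le_cancel_left1 order.trans less_imp_le mult_right_le_one_le)
  have "L^2 * (\<eta> * \<kappa> * lam) \<le> L^2 * (lam * lam)" using a1 lam_pos by (intro mult_left_mono mult_right_mono) auto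
  also have "\<dots> = (lam * L)^2" by (simp add: power2_eq_square algebra_simps)
  finally have b1: "L^2 * (\<eta> * \<kappa> * lam) \<le> (lam * L)^2" .
  have "L^2 * \<eta>^2 \<le> L^2 * lam^2" using eta_le eta_pos by (intro mult_left_mono power_mono) auto
  then have b2: "L^2 * \<eta>^2 \<le> (lam * L)^2" by (simp add: power_mult_distrib mult.commute)
  have b3: "(lam * L)^2 \<le> (1/4)^2" using lamL lL by (intro power_mono) auto
  have "4 * L^2 * (\<eta> * \<kappa> * lam + 4 * \<eta>^2) = 4 * (L^2 * (\<eta> * \<kappa> * lam)) + 16 * (L^2 * \<eta>^2)" by (simp add: algebra_simps)
  then show ?thesis unfolding \<kappa>_def[symmetric] using b1 b2 b3 k1 lamL by (simp add: power2_eq_square)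
qed

lemma core:
  fixes W :: "real^'n^'n" and X Yv g :: "'n \<Rightarrow> 'a"
  assumes W_nonneg: "\<And>i j. W $ i $ j \<ge> 0"
    and W_rows: "\<And>i. (\<Sum>j\<in>UNIV. W $ i $ j) = 1"
    and W_cols: "\<And>j. (\<Sum>i\<in>UNIV. W $ i $ j) = 1"
    and XD: "\<And>i. X i \<in> D"
    and sumY: "(\<Sum>i\<in>UNIV. Yv i) = (\<Sum>i\<in>UNIV. g i)"
  shows "(\<Sum>i\<in>UNIV. env (\<Sum>j\<in>UNIV. W $ j $ i *\<^sub>R Q (X j - \<eta> *\<^sub>R Yv j)))
     \<le> (\<Sum>i\<in>UNIV. env (X i)) + (4 / lam) * perp_sq X + (4 * \<eta>^2 / lam) * perp_sq Yv
       - (\<eta> / (4 * lam^2)) * (\<Sum>i\<in>UNIV. norm (P (X i) - X i)^2)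
       + Bv X \<bullet> ((1 / real CARD('n)) *\<^sub>R (\<Sum>i\<in>UNIV. g i - gf i (X i)))
       + (real CARD('n) * \<eta>^2 / lam) * norm ((1 / real CARD('n)) *\<^sub>R (\<Sum>i\<in>UNIV. g i - gf i (X i)))^2"
proof -
  define N where "N = real CARD('n)"
  have N0: "N > 0" unfolding N_def by simp
  define xh where "xh j = P (X j)" for j
  define a where "a j = X j - xh j" for j
  define xb where "xb = (1 / N) *\<^sub>R (\<Sum>j\<in>UNIV. X j)"
  define m where "m = P xb"
  define cv where "cv = xb - m"
  define Z where "Z j = Q (X j - \<eta> *\<^sub>R Yv j)" for j
  define eb where "eb = (1 / N) *\<^sub>R (\<Sum>i\<in>UNIV. g i - gf i (X i))"
  define yb where "yb = (1 / N) *\<^sub>R (\<Sum>i\<in>UNIV. Yv i)"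
  define yp where "yp j = Yv j - yb" for j
  define \<delta> where "\<delta> j = gb X - gF (X j)" for j
  define \<gamma> where "\<gamma> j = gF (X j) - gF (xh j)" for j
  define \<kappa> where "\<kappa> = 1 - \<eta> / lam"
  have xhD: "xh j \<in> D" for j unfolding xh_def by (rule P_min(1))
  have k0: "\<kappa> \<ge> 0" and k1: "\<kappa> \<le> 1" unfolding \<kappa>_def using eta_le eta_pos lam_pos by (auto simp: field_simps)
  have f1: "yb = gb X + eb"
  proof -
    have "(\<Sum>i\<in>UNIV. Yv i) = (\<Sum>i\<in>UNIV. gf i (X i)) + (\<Sum>i\<in>UNIV. g i - gf i (X i))"
      unfolding sumY by (simp add: sum_subtractf)
    then show ?thesis unfolding yb_def gb_def eb_def N_def by (simp add: scaleR_add_right)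
  qed
  have f2: "(\<Sum>j\<in>UNIV. yp j) = 0"
  proof -
    have "(\<Sum>j\<in>UNIV. yp j) = (\<Sum>j\<in>UNIV. Yv j) - N *\<^sub>R yb" unfolding yp_def N_def by (simp add: sum_subtractf sum_constant_scaleR)
    also have "N *\<^sub>R yb = (\<Sum>j\<in>UNIV. Yv j)" unfolding yb_def using N0 by simp
    finally show ?thesis by simp
  qed
  have f3: "norm (xh j - Z j)^2 \<le> norm (\<kappa> *\<^sub>R a j - \<eta> *\<^sub>R (eb + \<delta> j + \<gamma> j + yp j))^2" for j
  proof -
    have "norm (xh j - Z j) \<le> norm ((X j - \<eta> *\<^sub>R Yv j) - (xh j - \<eta> *\<^sub>R (gF (xh j) + (1 / lam) *\<^sub>R (xh j - X j))))"
      unfolding xh_def Z_def by (rule PQ_comp)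
    also have "(X j - \<eta> *\<^sub>R Yv j) - (xh j - \<eta> *\<^sub>R (gF (xh j) + (1 / lam) *\<^sub>R (xh j - X j)))
        = \<kappa> *\<^sub>R a j - \<eta> *\<^sub>R (eb + \<delta> j + \<gamma> j + yp j)"
    proof -
      have eq: "eb + \<delta> j + \<gamma> j + yp j = Yv j - gF (xh j)" unfolding \<delta>_def \<gamma>_def yp_def f1 by (simp add: algebra_simps)
      show ?thesis unfolding eq \<kappa>_def a_def by (simp add: algebra_simps scaleR_diff_left scaleR_diff_right)
    qed
    finally show ?thesis by (intro power_mono) auto
  qed
  have f4: "norm (\<kappa> *\<^sub>R a j - \<eta> *\<^sub>R (eb + \<delta> j + \<gamma> j + yp j))^2 - norm (a j)^2
    \<le> - (\<eta> / (2 * lam)) * norm (a j)^2 + \<kappa> * norm (a j - cv)^2 + (\<eta> * \<kappa> * lam + 4 * \<eta>^2) * norm (\<delta> j)^2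
       + (\<kappa> * \<eta>^2 + 2 * \<eta>^2) * norm (yp j)^2
       - 2 * \<eta> * \<kappa> * (cv \<bullet> yp j) - 2 * \<eta> * \<kappa> * (a j \<bullet> eb) + 4 * \<eta>^2 * (eb \<bullet> (\<delta> j + \<gamma> j)) + 2 * \<eta>^2 * norm eb ^ 2" for j
  proof (rule step_vec[OF eta_pos lam_pos eta_le less_imp_le[OF L_pos] lamL \<kappa>_def])
    show "norm (\<gamma> j) \<le> L * norm (a j)" unfolding \<gamma>_def a_def xh_def by (rule gF_lip[OF XD P_min(1)])
  qed
  have f5: "(\<Sum>j\<in>UNIV. cv \<bullet> yp j) = 0" using f2 by (simp add: inner_sum_right[symmetric])
  have f7: "norm (xh j - m)^2 \<le> 16 / 9 * norm (X j - xb)^2" for j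
  proof -
    have h: "norm (xh j - m) \<le> 4 / 3 * norm (X j - xb)" unfolding xh_def m_def by (rule P_lip)
    have "norm (xh j - m)^2 \<le> (4 / 3 * norm (X j - xb))^2" by (rule power_mono[OF h]) simp
    also have "\<dots> = 16 / 9 * norm (X j - xb)^2" by (simp add: power2_eq_square)
    finally show ?thesis .
  qed
  have f6: "norm (a j - cv)^2 \<le> 50 / 9 * norm (X j - xb)^2" for j
  proof -
    have "a j - cv = (X j - xb) + (- (xh j - m))" unfolding a_def cv_def by simp
    then have "norm (a j - cv)^2 \<le> 2 * norm (X j - xb)^2 + 2 * norm (- (xh j - m))^2"
      using norm_add_sq_le[of "X j - xb" "- (xh j - m)"] by simp
    then show ?thesis using f7[of j] by (simp add: norm_minus_commute)
  qed
  have f8: "(\<Sum>j\<in>UNIV. norm (\<delta> j)^2) \<le> 4 * L^2 * perp_sq X" unfolding \<delta>_def by (rule delta_bound[OF XD])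
  have f9: "(\<Sum>i\<in>UNIV. env (\<Sum>j\<in>UNIV. W $ j $ i *\<^sub>R Z j))
     \<le> (\<Sum>j\<in>UNIV. Fb (xh j) + R (xh j) + norm (xh j - Z j)^2 / (2 * lam) + L / 2 * norm (xh j - m)^2)"
    by (rule step2[OF W_nonneg W_rows W_cols xhD])
  have f10: "env (X j) = Fb (xh j) + R (xh j) + norm (a j)^2 / (2 * lam)" for j
    unfolding env_eq xh_def a_def by (simp add: norm_minus_commute)
  have pX: "perp_sq X = (\<Sum>j\<in>UNIV. norm (X j - xb)^2)" unfolding perp_sq_def xb_def N_def by simp
  have pY: "perp_sq Yv = (\<Sum>j\<in>UNIV. norm (yp j)^2)" unfolding perp_sq_def yp_def yb_def N_def by simp
  have Bv_eq: "Bv X = (1 / (2 * lam)) *\<^sub>R (\<Sum>j\<in>UNIV. (- (2 * \<eta> * \<kappa>)) *\<^sub>R a j + (4 * \<eta>^2) *\<^sub>R (\<delta> j + \<gamma> j))"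
    unfolding Bv_def \<kappa>_def a_def xh_def \<delta>_def \<gamma>_def ..
  define SA where "SA = (\<Sum>j\<in>UNIV. norm (a j)^2)"
  define SAC where "SAC = (\<Sum>j\<in>UNIV. norm (a j - cv)^2)"
  define SD where "SD = (\<Sum>j\<in>UNIV. norm (\<delta> j)^2)"
  define SM where "SM = (\<Sum>j\<in>UNIV. norm (xh j - m)^2)"
  define PX where "PX = perp_sq X"
  define PY where "PY = perp_sq Yv"
  define LIN where "LIN = (\<Sum>j\<in>UNIV. - 2 * \<eta> * \<kappa> * (a j \<bullet> eb) + 4 * \<eta>^2 * (eb \<bullet> (\<delta> j + \<gamma> j)))"
  have LIN_eq: "LIN = 2 * lam * (Bv X \<bullet> eb)"
  proof -
    have "Bv X \<bullet> eb = (1 / (2 * lam)) * (\<Sum>j\<in>UNIV. - 2 * \<eta> * \<kappa> * (a j \<bullet> eb) + 4 * \<eta>^2 * (eb \<bullet> (\<delta> j + \<gamma> j)))"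
      unfolding Bv_eq by (simp add: inner_sum_left inner_add_left inner_commute inner_sum_right inner_diff_right inner_add_right)
    then show ?thesis unfolding LIN_def using lam_pos by simp
  qed
  have SAC_le: "SAC \<le> 50 / 9 * PX" unfolding SAC_def PX_def pX
    using sum_mono[OF f6] by (simp add: sum_distrib_left)
  have SM_le: "SM \<le> 16 / 9 * PX" unfolding SM_def PX_def pX
    using sum_mono[OF f7] by (simp add: sum_distrib_left)
  have SD_le: "SD \<le> 4 * L^2 * PX" using f8 unfolding SD_def PX_def .
  have sum4: "(\<Sum>j\<in>UNIV. norm (\<kappa> *\<^sub>R a j - \<eta> *\<^sub>R (eb + \<delta> j + \<gamma> j + yp j))^2) - SA
     \<le> - (\<eta> / (2 * lam)) * SA + \<kappa> * SAC + (\<eta> * \<kappa> * lam + 4 * \<eta>^2) * SD + (\<kappa> * \<eta>^2 + 2 * \<eta>^2) * PY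
        + LIN + 2 * N * \<eta>^2 * norm eb ^ 2"
  proof -
    have "(\<Sum>j\<in>UNIV. norm (\<kappa> *\<^sub>R a j - \<eta> *\<^sub>R (eb + \<delta> j + \<gamma> j + yp j))^2 - norm (a j)^2)
      \<le> (\<Sum>j\<in>UNIV. - (\<eta> / (2 * lam)) * norm (a j)^2 + \<kappa> * norm (a j - cv)^2 + (\<eta> * \<kappa> * lam + 4 * \<eta>^2) * norm (\<delta> j)^2
       + (\<kappa> * \<eta>^2 + 2 * \<eta>^2) * norm (yp j)^2
       - 2 * \<eta> * \<kappa> * (cv \<bullet> yp j) + (- 2 * \<eta> * \<kappa> * (a j \<bullet> eb) + 4 * \<eta>^2 * (eb \<bullet> (\<delta> j + \<gamma> j))) + 2 * \<eta>^2 * norm eb ^ 2)"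
    proof (rule sum_mono)
      fix j show "norm (\<kappa> *\<^sub>R a j - \<eta> *\<^sub>R (eb + \<delta> j + \<gamma> j + yp j))^2 - norm (a j)^2
      \<le> - (\<eta> / (2 * lam)) * norm (a j)^2 + \<kappa> * norm (a j - cv)^2 + (\<eta> * \<kappa> * lam + 4 * \<eta>^2) * norm (\<delta> j)^2
       + (\<kappa> * \<eta>^2 + 2 * \<eta>^2) * norm (yp j)^2
       - 2 * \<eta> * \<kappa> * (cv \<bullet> yp j) + (- 2 * \<eta> * \<kappa> * (a j \<bullet> eb) + 4 * \<eta>^2 * (eb \<bullet> (\<delta> j + \<gamma> j))) + 2 * \<eta>^2 * norm eb ^ 2"
        using f4[of j] by linarith
    qed
    also have "\<dots> = - (\<eta> / (2 * lam)) * SA + \<kappa> * SAC + (\<eta> * \<kappa> * lam + 4 * \<eta>^2) * SD + (\<kappa> * \<eta>^2 + 2 * \<eta>^2) * PY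
        - 2 * \<eta> * \<kappa> * (\<Sum>j\<in>UNIV. cv \<bullet> yp j) + LIN + 2 * N * \<eta>^2 * norm eb ^ 2"
      unfolding SA_def SAC_def SD_def PY_def pY LIN_def N_def
      by (simp add: sum.distrib sum_subtractf sum_distrib_left sum_negf)
    finally show ?thesis using f5 by (simp add: sum_subtractf SA_def)
  qed
  have sumK: "(\<Sum>j\<in>UNIV. norm (xh j - Z j)^2) \<le> (\<Sum>j\<in>UNIV. norm (\<kappa> *\<^sub>R a j - \<eta> *\<^sub>R (eb + \<delta> j + \<gamma> j + yp j))^2)"
    by (rule sum_mono[OF f3])
  have lhs: "(\<Sum>i\<in>UNIV. env (\<Sum>j\<in>UNIV. W $ j $ i *\<^sub>R Z j)) - (\<Sum>i\<in>UNIV. env (X i))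
      \<le> ((\<Sum>j\<in>UNIV. norm (xh j - Z j)^2) - SA) / (2 * lam) + L / 2 * SM"
  proof -
    have "(\<Sum>j\<in>UNIV. Fb (xh j) + R (xh j) + norm (xh j - Z j)^2 / (2 * lam) + L / 2 * norm (xh j - m)^2)
        = (\<Sum>j\<in>UNIV. env (X j)) + ((\<Sum>j\<in>UNIV. norm (xh j - Z j)^2) - SA) / (2 * lam) + L / 2 * SM"
      unfolding f10 SA_def SM_def by (simp add: sum.distrib sum_subtractf sum_distrib_left sum_divide_distrib diff_divide_distrib algebra_simps)
    then show ?thesis using f9 by linarith
  qed
  have PX0: "PX \<ge> 0" unfolding PX_def perp_sq_def by (simp add: sum_nonneg)
  have PY0: "PY \<ge> 0" unfolding PY_def perp_sq_def by (simp add: sum_nonneg)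
  have cD0: "\<eta> * \<kappa> * lam + 4 * \<eta>^2 \<ge> 0" using k0 eta_pos lam_pos by simp
  have g1: "\<kappa> * SAC \<le> \<kappa> * (50 / 9 * PX)" using SAC_le k0 by (intro mult_left_mono) auto
  have g2: "(\<eta> * \<kappa> * lam + 4 * \<eta>^2) * SD \<le> (\<eta> * \<kappa> * lam + 4 * \<eta>^2) * (4 * L^2 * PX)"
    using SD_le cD0 by (intro mult_left_mono) auto
  have g3: "lam * L * SM \<le> lam * L * (16 / 9 * PX)" using SM_le lam_pos L_pos by (intro mult_left_mono) auto
  have g4: "(50 / 9 * \<kappa> + 4 * L^2 * (\<eta> * \<kappa> * lam + 4 * \<eta>^2) + 16 / 9 * (lam * L)) * PX \<le> 8 * PX"
    using coef_fact PX0 unfolding \<kappa>_def by (intro mult_right_mono) auto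
  have "\<kappa> * \<eta>^2 \<le> 1 * \<eta>^2" using k1 by (intro mult_right_mono) auto
  moreover have "\<eta>^2 \<ge> 0" by simp
  ultimately have "\<kappa> * \<eta>^2 + 2 * \<eta>^2 \<le> 8 * \<eta>^2" by linarith
  then have g5: "(\<kappa> * \<eta>^2 + 2 * \<eta>^2) * PY \<le> 8 * \<eta>^2 * PY" using PY0 by (rule mult_right_mono)
  have comb: "\<kappa> * SAC + (\<eta> * \<kappa> * lam + 4 * \<eta>^2) * SD + lam * L * SM \<le> 8 * PX"
    using g1 g2 g3 g4 by (simp add: algebra_simps)
  have main2: "2 * lam * ((\<Sum>i\<in>UNIV. env (\<Sum>j\<in>UNIV. W $ j $ i *\<^sub>R Z j)) - (\<Sum>i\<in>UNIV. env (X i)))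
      \<le> - (\<eta> / (2 * lam)) * SA + 8 * PX + 8 * \<eta>^2 * PY + LIN + 2 * N * \<eta>^2 * norm eb ^ 2"
  proof -
    have "2 * lam * ((\<Sum>i\<in>UNIV. env (\<Sum>j\<in>UNIV. W $ j $ i *\<^sub>R Z j)) - (\<Sum>i\<in>UNIV. env (X i)))
        \<le> 2 * lam * (((\<Sum>j\<in>UNIV. norm (xh j - Z j)^2) - SA) / (2 * lam) + L / 2 * SM)"
      using lhs lam_pos by (intro mult_left_mono) auto
    also have "\<dots> = ((\<Sum>j\<in>UNIV. norm (xh j - Z j)^2) - SA) + lam * L * SM" using lam_pos by (simp add: field_simps)
    finally show ?thesis using sumK sum4 comb g5 by linarith
  qed
  have SAeq: "SA = (\<Sum>i\<in>UNIV. norm (P (X i) - X i)^2)" unfolding SA_def a_def xh_def by (simp add: norm_minus_commute)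
  have "(\<Sum>i\<in>UNIV. env (\<Sum>j\<in>UNIV. W $ j $ i *\<^sub>R Z j)) - (\<Sum>i\<in>UNIV. env (X i))
     \<le> (- (\<eta> / (2 * lam)) * SA + 8 * PX + 8 * \<eta>^2 * PY + LIN + 2 * N * \<eta>^2 * norm eb ^ 2) / (2 * lam)"
    using main2 lam_pos by (simp add: field_simps)
  also have "\<dots> = (4 / lam) * PX + (4 * \<eta>^2 / lam) * PY - (\<eta> / (4 * lam^2)) * SA + Bv X \<bullet> eb + (N * \<eta>^2 / lam) * norm eb ^ 2"
    unfolding LIN_eq using lam_pos by (simp add: field_simps power2_eq_square)
  finally show ?thesis unfolding SAeq[symmetric] PX_def PY_def Z_def[symmetric] eb_def[symmetric] N_def[symmetric] by linarith
qed

end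

lemma kernel:
  fixes U :: "'w \<Rightarrow> 'u" and V :: "'w \<Rightarrow> 'u" and h :: "'u \<Rightarrow> 'u \<Rightarrow> 'a::euclidean_space" and C :: "'u \<Rightarrow> 'a"
  assumes M: "prob_space M"
    and ind: "prob_space.indep_var M N U S V"
    and Dk: "distr M S V = Dk" and Dkp: "prob_space Dk"
    and hm: "(\<lambda>(u, v). h u v) \<in> borel_measurable (N \<Otimes>\<^sub>M S)"
    and hmean: "\<And>u. u \<in> space N \<Longrightarrow> has_bochner_integral Dk (h u) 0"
    and hvar: "\<And>u. u \<in> space N \<Longrightarrow> (\<integral>\<^sup>+ v. ennreal (norm (h u v)^2) \<partial>Dk) \<le> ennreal \<sigma>2"
    and Cm: "C \<in> borel_measurable N"
    and Csq: "integrable M (\<lambda>\<omega>. norm (C (U \<omega>))^2)"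
  shows "(\<integral>\<^sup>+ \<omega>. ennreal (norm (h (U \<omega>) (V \<omega>))^2) \<partial>M) \<le> ennreal \<sigma>2"
    and "integrable M (\<lambda>\<omega>. C (U \<omega>) \<bullet> h (U \<omega>) (V \<omega>))"
    and "(\<integral>\<omega>. C (U \<omega>) \<bullet> h (U \<omega>) (V \<omega>) \<partial>M) = 0"
proof -
  interpret M: prob_space M by (rule M)
  have Um: "U \<in> M \<rightarrow>\<^sub>M N" and Vm: "V \<in> M \<rightarrow>\<^sub>M S"
    and eq0: "distr M N U \<Otimes>\<^sub>M distr M S V = distr M (N \<Otimes>\<^sub>M S) (\<lambda>x. (U x, V x))"
    using ind unfolding M.indep_var_distribution_eq by auto
  define \<mu> where "\<mu> = distr M N U"
  have \<mu>p: "prob_space \<mu>" unfolding \<mu>_def by (rule M.prob_space_distr[OF Um])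
  have s\<mu>: "space \<mu> = space N" unfolding \<mu>_def by simp
  have UVm: "(\<lambda>x. (U x, V x)) \<in> M \<rightarrow>\<^sub>M N \<Otimes>\<^sub>M S" using Um Vm by (rule measurable_Pair)
  have eq: "distr M (N \<Otimes>\<^sub>M S) (\<lambda>x. (U x, V x)) = \<mu> \<Otimes>\<^sub>M Dk" using eq0 Dk unfolding \<mu>_def by simp
  have sfD: "sigma_finite_measure Dk" by (rule prob_space_imp_sigma_finite[OF Dkp])
  have sf\<mu>: "sigma_finite_measure \<mu>" by (rule prob_space_imp_sigma_finite[OF \<mu>p])
  interpret PS: pair_sigma_finite \<mu> Dk by (rule pair_sigma_finite.intro[OF sf\<mu> sfD])
  have sets\<mu>: "sets (\<mu> \<Otimes>\<^sub>M Dk) = sets (N \<Otimes>\<^sub>M S)"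
    unfolding \<mu>_def using Dk[symmetric] by (intro sets_pair_measure_cong) auto
  have hm': "(\<lambda>p. h (fst p) (snd p)) \<in> borel_measurable (N \<Otimes>\<^sub>M S)" using hm by (simp add: case_prod_beta)
  have hsq_m: "(\<lambda>p. ennreal (norm (h (fst p) (snd p))^2)) \<in> borel_measurable (N \<Otimes>\<^sub>M S)"
    using hm' by measurable
  show K1: "(\<integral>\<^sup>+ \<omega>. ennreal (norm (h (U \<omega>) (V \<omega>))^2) \<partial>M) \<le> ennreal \<sigma>2"
  proof -
    have "(\<integral>\<^sup>+ \<omega>. ennreal (norm (h (U \<omega>) (V \<omega>))^2) \<partial>M)
        = (\<integral>\<^sup>+ p. ennreal (norm (h (fst p) (snd p))^2) \<partial>distr M (N \<Otimes>\<^sub>M S) (\<lambda>x. (U x, V x)))"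
      by (subst nn_integral_distr[OF UVm]) (use hsq_m in auto)
    also have "\<dots> = (\<integral>\<^sup>+ p. ennreal (norm (h (fst p) (snd p))^2) \<partial>(\<mu> \<Otimes>\<^sub>M Dk))" unfolding eq ..
    also have "\<dots> = (\<integral>\<^sup>+ u. \<integral>\<^sup>+ v. ennreal (norm (h u v)^2) \<partial>Dk \<partial>\<mu>)"
    proof -
      have E: "borel_measurable (\<mu> \<Otimes>\<^sub>M Dk) = borel_measurable (N \<Otimes>\<^sub>M S)" by (rule measurable_cong_sets[OF sets\<mu> refl])
      have hsq_m': "(\<lambda>p. ennreal (norm (h (fst p) (snd p))^2)) \<in> borel_measurable (\<mu> \<Otimes>\<^sub>M Dk)" by (subst E) (rule hsq_m)
      show ?thesis using sigma_finite_measure.nn_integral_fst[OF sfD hsq_m'] by simp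
    qed
    also have "\<dots> \<le> (\<integral>\<^sup>+ u. ennreal \<sigma>2 \<partial>\<mu>)"
      by (intro nn_integral_mono) (use hvar s\<mu> in auto)
    also have "\<dots> = ennreal \<sigma>2" using prob_space.emeasure_space_1[OF \<mu>p] by simp
    finally show ?thesis .
  qed
  have Cm': "(\<lambda>\<omega>. C (U \<omega>)) \<in> borel_measurable M" using Cm Um by measurable
  have em: "(\<lambda>\<omega>. h (U \<omega>) (V \<omega>)) \<in> borel_measurable M"
    using measurable_compose[OF UVm hm'] by simp
  have fm: "(\<lambda>\<omega>. C (U \<omega>) \<bullet> h (U \<omega>) (V \<omega>)) \<in> borel_measurable M" using Cm' em by measurable
  have hint: "integrable M (\<lambda>\<omega>. norm (h (U \<omega>) (V \<omega>))^2)"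
  proof (rule integrableI_nonneg)
    show "(\<lambda>\<omega>. norm (h (U \<omega>) (V \<omega>))^2) \<in> borel_measurable M" using em by measurable
    show "AE x in M. 0 \<le> norm (h (U x) (V x))^2" by simp
    have "ennreal \<sigma>2 < \<infinity>" by simp
    then show "(\<integral>\<^sup>+ x. ennreal (norm (h (U x) (V x))^2) \<partial>M) < \<infinity>" using K1 by (rule le_less_trans[rotated])
  qed
  show K2: "integrable M (\<lambda>\<omega>. C (U \<omega>) \<bullet> h (U \<omega>) (V \<omega>))"
  proof (rule Bochner_Integration.integrable_bound[OF Bochner_Integration.integrable_add[OF Csq hint] fm], rule AE_I2)
    fix \<omega>
    have a: "\<bar>C (U \<omega>) \<bullet> h (U \<omega>) (V \<omega>)\<bar> \<le> norm (C (U \<omega>)) * norm (h (U \<omega>) (V \<omega>))" by (rule Cauchy_Schwarz_ineq2)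
    have b: "norm (C (U \<omega>)) * norm (h (U \<omega>) (V \<omega>)) \<le> norm (C (U \<omega>))^2 + norm (h (U \<omega>) (V \<omega>))^2"
    proof -
      have "0 \<le> (norm (C (U \<omega>)) - norm (h (U \<omega>) (V \<omega>)))^2" by simp
      then show ?thesis by (simp add: power2_eq_square algebra_simps) (smt (verit) norm_ge_zero mult_nonneg_nonneg)
    qed
    show "norm (C (U \<omega>) \<bullet> h (U \<omega>) (V \<omega>)) \<le> norm (norm (C (U \<omega>))^2 + norm (h (U \<omega>) (V \<omega>))^2)"
      using a b by simp
  qed
  show "(\<integral>\<omega>. C (U \<omega>) \<bullet> h (U \<omega>) (V \<omega>) \<partial>M) = 0"
  proof -
    define F where "F p = C (fst p) \<bullet> h (fst p) (snd p)" for p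
    have Fm: "F \<in> borel_measurable (N \<Otimes>\<^sub>M S)" unfolding F_def using Cm hm' by measurable
    have "(\<integral>\<omega>. C (U \<omega>) \<bullet> h (U \<omega>) (V \<omega>) \<partial>M) = (\<integral>p. F p \<partial>distr M (N \<Otimes>\<^sub>M S) (\<lambda>x. (U x, V x)))"
      by (subst integral_distr[OF UVm Fm]) (simp add: F_def)
    also have "\<dots> = (\<integral>p. F p \<partial>(\<mu> \<Otimes>\<^sub>M Dk))" unfolding eq ..
    also have "\<dots> = (\<integral>u. \<integral>v. F (u, v) \<partial>Dk \<partial>\<mu>)"
    proof (rule PS.integral_fst'[symmetric])
      have "integrable (distr M (N \<Otimes>\<^sub>M S) (\<lambda>x. (U x, V x))) F"
        using K2 by (subst integrable_distr_eq[OF UVm Fm]) (simp add: F_def)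
      then show "integrable (\<mu> \<Otimes>\<^sub>M Dk) F" unfolding eq .
    qed
    also have "\<dots> = (\<integral>u. 0 \<partial>\<mu>)"
    proof (rule Bochner_Integration.integral_cong[OF refl])
      fix u assume "u \<in> space \<mu>"
      then have "has_bochner_integral Dk (\<lambda>v. C u \<bullet> h u v) (C u \<bullet> 0)"
        using hmean s\<mu> by (intro has_bochner_integral_inner_right) auto
      then show "(\<integral>v. F (u, v) \<partial>Dk) = 0" unfolding F_def by (simp add: has_bochner_integral_integral_eq)
    qed
    finally show ?thesis by simp
  qed
qed


definition sqi :: "'w measure \<Rightarrow> ('w \<Rightarrow> 'a::euclidean_space) \<Rightarrow> bool" where
  "sqi M f \<longleftrightarrow> f \<in> borel_measurable M \<and> integrable M (\<lambda>\<omega>. norm (f \<omega>)^2)"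

lemma sq_add_le: fixes a b :: real shows "(a + b)^2 \<le> 2 * a^2 + 2 * b^2"
proof -
  have "0 \<le> (a - b)^2" by simp
  then show ?thesis by (simp add: power2_eq_square algebra_simps)
qed

lemma sqi_bound:
  assumes M: "finite_measure M" and f: "sqi M f" and gm: "g \<in> borel_measurable M"
    and a: "a \<ge> 0" and b: "b \<ge> 0" and bd: "\<And>\<omega>. \<omega> \<in> space M \<Longrightarrow> norm (g \<omega>) \<le> a + b * norm (f \<omega>)"
  shows "sqi M g"
proof -
  interpret finite_measure M by (rule M)
  have fi: "integrable M (\<lambda>\<omega>. norm (f \<omega>)^2)" using f unfolding sqi_def by auto
  have maj: "integrable M (\<lambda>\<omega>. 2 * a^2 + 2 * b^2 * norm (f \<omega>)^2)"
    using fi by (intro Bochner_Integration.integrable_add integrable_mult_right) auto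
  have "integrable M (\<lambda>\<omega>. norm (g \<omega>)^2)"
  proof (rule Bochner_Integration.integrable_bound[OF maj], measurable)
    show "g \<in> borel_measurable M" by (rule gm)
    show "AE \<omega> in M. norm (norm (g \<omega>)^2) \<le> norm (2 * a^2 + 2 * b^2 * norm (f \<omega>)^2)"
    proof (rule AE_I2)
      fix \<omega> assume w: "\<omega> \<in> space M"
      have "norm (g \<omega>)^2 \<le> (a + b * norm (f \<omega>))^2" using bd[OF w] by (intro power_mono) auto
      also have "\<dots> \<le> 2 * a^2 + 2 * (b * norm (f \<omega>))^2" by (rule sq_add_le)
      finally show "norm (norm (g \<omega>)^2) \<le> norm (2 * a^2 + 2 * b^2 * norm (f \<omega>)^2)"
        by (simp add: power_mult_distrib)
    qed
  qed
  then show ?thesis using gm unfolding sqi_def by auto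
qed

lemma sqi_const: "finite_measure M \<Longrightarrow> sqi M (\<lambda>_. c)"
  unfolding sqi_def by (auto intro: finite_measure.integrable_const)

lemma sqi_add:
  assumes M: "finite_measure M" and f: "sqi M f" and g: "sqi M g"
  shows "sqi M (\<lambda>\<omega>. f \<omega> + g \<omega>)"
proof -
  have fm: "f \<in> borel_measurable M" and gm: "g \<in> borel_measurable M"
    and fi: "integrable M (\<lambda>\<omega>. norm (f \<omega>)^2)" and gi: "integrable M (\<lambda>\<omega>. norm (g \<omega>)^2)"
    using f g unfolding sqi_def by auto
  have maj: "integrable M (\<lambda>\<omega>. 2 * norm (f \<omega>)^2 + 2 * norm (g \<omega>)^2)"
    using fi gi by (intro Bochner_Integration.integrable_add integrable_mult_right) auto
  have m: "(\<lambda>\<omega>. f \<omega> + g \<omega>) \<in> borel_measurable M" using fm gm by measurable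
  have "integrable M (\<lambda>\<omega>. norm (f \<omega> + g \<omega>)^2)"
  proof (rule Bochner_Integration.integrable_bound[OF maj])
    show "(\<lambda>\<omega>. norm (f \<omega> + g \<omega>)^2) \<in> borel_measurable M" using m by measurable
    show "AE \<omega> in M. norm (norm (f \<omega> + g \<omega>)^2) \<le> norm (2 * norm (f \<omega>)^2 + 2 * norm (g \<omega>)^2)"
    proof (rule AE_I2)
      fix \<omega>
      have "norm (f \<omega> + g \<omega>)^2 \<le> (norm (f \<omega>) + norm (g \<omega>))^2" by (intro power_mono norm_triangle_ineq) auto
      also have "\<dots> \<le> 2 * norm (f \<omega>)^2 + 2 * norm (g \<omega>)^2" by (rule sq_add_le)
      finally show "norm (norm (f \<omega> + g \<omega>)^2) \<le> norm (2 * norm (f \<omega>)^2 + 2 * norm (g \<omega>)^2)" by simp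
    qed
  qed
  then show ?thesis using m unfolding sqi_def by auto
qed

lemma sqi_scale:
  assumes M: "finite_measure M" and f: "sqi M f"
  shows "sqi M (\<lambda>\<omega>. c *\<^sub>R f \<omega>)"
proof (rule sqi_bound[OF M f, where a = 0 and b = "\<bar>c\<bar>"])
  show "(\<lambda>\<omega>. c *\<^sub>R f \<omega>) \<in> borel_measurable M" using f unfolding sqi_def by (auto intro: borel_measurable_scaleR)
qed auto

lemma sqi_neg: assumes M: "finite_measure M" and f: "sqi M f" shows "sqi M (\<lambda>\<omega>. - f \<omega>)"
  using sqi_scale[OF M f, of "-1"] by simp

lemma sqi_diff:
  assumes M: "finite_measure M" and f: "sqi M f" and g: "sqi M g"
  shows "sqi M (\<lambda>\<omega>. f \<omega> - g \<omega>)"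
  using sqi_add[OF M f sqi_neg[OF M g]] by simp

lemma sqi_sum:
  assumes M: "finite_measure M" and I: "finite I" and f: "\<And>k. k \<in> I \<Longrightarrow> sqi M (f k)"
  shows "sqi M (\<lambda>\<omega>. \<Sum>k\<in>I. f k \<omega>)"
  using I f
proof (induction I rule: finite_induct)
  case empty then show ?case using sqi_const[OF M, of 0] by simp
next
  case (insert x F)
  then show ?case by (simp add: sqi_add[OF M])
qed

lemma sqi_integrable_sq: "sqi M f \<Longrightarrow> integrable M (\<lambda>\<omega>. norm (f \<omega>)^2)"
  unfolding sqi_def by auto

lemma sqi_meas: "sqi M f \<Longrightarrow> f \<in> borel_measurable M"
  unfolding sqi_def by auto

lemma sqi_inner:
  assumes f: "sqi M f" and g: "sqi M g"
  shows "integrable M (\<lambda>\<omega>. f \<omega> \<bullet> g \<omega>)"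
proof -
  have maj: "integrable M (\<lambda>\<omega>. norm (f \<omega>)^2 + norm (g \<omega>)^2)"
    using f g unfolding sqi_def by (auto intro: Bochner_Integration.integrable_add)
  show ?thesis
  proof (rule Bochner_Integration.integrable_bound[OF maj])
    have fm: "f \<in> borel_measurable M" and gm: "g \<in> borel_measurable M" using f g unfolding sqi_def by auto
    show "(\<lambda>\<omega>. f \<omega> \<bullet> g \<omega>) \<in> borel_measurable M" using fm gm by measurable
    show "AE \<omega> in M. norm (f \<omega> \<bullet> g \<omega>) \<le> norm (norm (f \<omega>)^2 + norm (g \<omega>)^2)"
    proof (rule AE_I2)
      fix \<omega>
      have a: "\<bar>f \<omega> \<bullet> g \<omega>\<bar> \<le> norm (f \<omega>) * norm (g \<omega>)" by (rule Cauchy_Schwarz_ineq2)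
      have "0 \<le> (norm (f \<omega>) - norm (g \<omega>))^2" by simp
      then have b: "2 * (norm (f \<omega>) * norm (g \<omega>)) \<le> norm (f \<omega>)^2 + norm (g \<omega>)^2" by (simp add: power2_eq_square algebra_simps)
      have c: "norm (f \<omega>) * norm (g \<omega>) \<ge> 0" by simp
      show "norm (f \<omega> \<bullet> g \<omega>) \<le> norm (norm (f \<omega>)^2 + norm (g \<omega>)^2)" using a b c by simp
    qed
  qed
qed

lemma sqi_norm_sq_integrable: "sqi M f \<Longrightarrow> integrable M (\<lambda>\<omega>. norm (f \<omega>)^2)" by (rule sqi_integrable_sq)

context setting begin

lemma Q_cont: "continuous_on UNIV Q"
  by (rule lipschitz_on_continuous_on[of 1]) (auto simp: lipschitz_on_def dist_norm Q_nonexp)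

lemma P_cont: "continuous_on UNIV P"
  by (rule lipschitz_on_continuous_on[of "4/3"]) (use P_lip in \<open>auto simp: lipschitz_on_def dist_norm\<close>)

lemma env_cont: "continuous_on UNIV env"
proof -
  have "isCont env x" for x
  proof -
    have up: "env y \<le> env x + (norm (P x - y)^2 - norm (P x - x)^2) / (2 * lam)" for y
      using env_le[OF P_min(1)[of x], of y] env_eq[of x] by (simp add: diff_divide_distrib)
    have lo: "env x + (norm (P y - y)^2 - norm (P y - x)^2) / (2 * lam) \<le> env y" for y
      using env_le[OF P_min(1)[of y], of x] env_eq[of y] by (simp add: diff_divide_distrib)
    have Pc: "(P \<longlongrightarrow> P x) (at x)" using P_cont by (simp add: continuous_on_def isCont_def continuous_on_eq_continuous_at)
    have l1: "((\<lambda>y. env x + (norm (P x - y)^2 - norm (P x - x)^2) / (2 * lam)) \<longlongrightarrow> env x + (norm (P x - x)^2 - norm (P x - x)^2) / (2 * lam)) (at x)"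
      using lam_pos by (intro tendsto_intros) auto
    have l2: "((\<lambda>y. env x + (norm (P y - y)^2 - norm (P y - x)^2) / (2 * lam)) \<longlongrightarrow> env x + (norm (P x - x)^2 - norm (P x - x)^2) / (2 * lam)) (at x)"
      using lam_pos by (intro tendsto_intros Pc) auto
    have "(env \<longlongrightarrow> env x) (at x)"
      by (rule tendsto_sandwich[OF _ _ l2[simplified] l1[simplified]]) (use up lo in auto)
    then show ?thesis by (simp add: isCont_def)
  qed
  then show ?thesis by (simp add: continuous_at_imp_continuous_on)
qed

end

locale alg = setting r f gf \<phi> L \<eta> lam for r :: "'a::euclidean_space \<Rightarrow> ereal" and f :: "'n::finite \<Rightarrow> 'a \<Rightarrow> real"
    and gf \<phi> L \<eta> lam +
  fixes W :: "real^'n^'n" and G :: "'n \<Rightarrow> 'a \<Rightarrow> 'b \<Rightarrow> 'a" and x0 :: "'n \<Rightarrow> 'a"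
  assumes W_nonneg: "\<And>i j. W $ i $ j \<ge> 0"
    and W_rows: "\<And>i. (\<Sum>j\<in>UNIV. W $ i $ j) = 1"
    and W_cols: "\<And>j. (\<Sum>i\<in>UNIV. W $ i $ j) = 1"
    and x0_dom: "\<And>i. x0 i \<in> edom r"
begin

definition "aX xi t \<omega> = fst (dprox_state W G r \<eta> x0 xi t \<omega>)"
definition "aY xi t \<omega> = fst (snd (dprox_state W G r \<eta> x0 xi t \<omega>))"
definition "aG xi t \<omega> = snd (snd (dprox_state W G r \<eta> x0 xi t \<omega>))"

lemma st_eq: "dprox_state W G r \<eta> x0 xi t \<omega> = (aX xi t \<omega>, aY xi t \<omega>, aG xi t \<omega>)"
  unfolding aX_def aY_def aG_def by simp

lemma aG_Suc: "aG xi (Suc t) \<omega> = (\<lambda>i. G i (aX xi t \<omega> i) (xi t i \<omega>))"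
  unfolding aG_def by (simp add: st_eq[of xi t \<omega>])

lemma aY_Suc: "aY xi (Suc t) \<omega> = (\<lambda>i. \<Sum>j\<in>UNIV. W $ j $ i *\<^sub>R (aY xi t \<omega> j + G j (aX xi t \<omega> j) (xi t j \<omega>) - aG xi t \<omega> j))"
  by (subst aY_def) (simp add: st_eq[of xi t \<omega>])

lemma aX_Suc: "aX xi (Suc t) \<omega> = (\<lambda>i. \<Sum>j\<in>UNIV. W $ j $ i *\<^sub>R Q (aX xi t \<omega> j - \<eta> *\<^sub>R aY xi (Suc t) \<omega> j))"
  by (subst aX_def) (simp add: st_eq[of xi t \<omega>] aY_Suc Q_def)

lemma aX_0: "aX xi 0 \<omega> = x0" and aY_0: "aY xi 0 \<omega> = (\<lambda>_. 0)" and aG_0: "aG xi 0 \<omega> = (\<lambda>_. 0)"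
  unfolding aX_def aY_def aG_def by simp_all

lemma aX_D: "aX xi t \<omega> i \<in> D"
proof (induction t arbitrary: i)
  case 0 then show ?case using x0_dom by (simp add: aX_0)
next
  case (Suc t)
  show ?case unfolding aX_Suc
    by (rule convex_sum[OF _ D_convex W_cols W_nonneg Q_min(1)]) auto
qed

lemma sum_YG: "(\<Sum>i\<in>UNIV. aY xi t \<omega> i) = (\<Sum>i\<in>UNIV. aG xi t \<omega> i)"
proof (induction t)
  case 0 then show ?case by (simp add: aY_0 aG_0)
next
  case (Suc t)
  have "(\<Sum>i\<in>UNIV. aY xi (Suc t) \<omega> i) = (\<Sum>j\<in>UNIV. (\<Sum>i\<in>UNIV. W $ j $ i) *\<^sub>R (aY xi t \<omega> j + G j (aX xi t \<omega> j) (xi t j \<omega>) - aG xi t \<omega> j))"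
    unfolding aY_Suc by (subst sum.swap) (simp add: scaleR_sum_left)
  also have "\<dots> = (\<Sum>j\<in>UNIV. aY xi t \<omega> j) + (\<Sum>j\<in>UNIV. G j (aX xi t \<omega> j) (xi t j \<omega>)) - (\<Sum>j\<in>UNIV. aG xi t \<omega> j)"
    using W_rows by (simp add: sum.distrib sum_subtractf)
  also have "\<dots> = (\<Sum>i\<in>UNIV. aG xi (Suc t) \<omega> i)" using Suc by (simp add: aG_Suc)
  finally show ?case .
qed

lemma st_cong: "(\<And>s j. s < t \<Longrightarrow> xi s j \<omega> = xi2 s j \<omega>2) \<Longrightarrow>
    dprox_state W G r \<eta> x0 xi t \<omega> = dprox_state W G r \<eta> x0 xi2 t \<omega>2"
proof (induction t)
  case 0 then show ?case by simp
next
  case (Suc t)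
  then have IH: "dprox_state W G r \<eta> x0 xi t \<omega> = dprox_state W G r \<eta> x0 xi2 t \<omega>2" by auto
  have "xi t j \<omega> = xi2 t j \<omega>2" for j using Suc.prems by auto
  then show ?case by (simp add: IH)
qed

lemma pointwise:
  "(\<Sum>i\<in>UNIV. env (aX xi (Suc t) \<omega> i))
     \<le> (\<Sum>i\<in>UNIV. env (aX xi t \<omega> i)) + (4 / lam) * perp_sq (aX xi t \<omega>) + (4 * \<eta>^2 / lam) * perp_sq (aY xi (Suc t) \<omega>)
       - (\<eta> / (4 * lam^2)) * (\<Sum>i\<in>UNIV. norm (P (aX xi t \<omega> i) - aX xi t \<omega> i)^2)
       + Bv (aX xi t \<omega>) \<bullet> ((1 / real CARD('n)) *\<^sub>R (\<Sum>i\<in>UNIV. G i (aX xi t \<omega> i) (xi t i \<omega>) - gf i (aX xi t \<omega> i)))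
       + (real CARD('n) * \<eta>^2 / lam) * norm ((1 / real CARD('n)) *\<^sub>R (\<Sum>i\<in>UNIV. G i (aX xi t \<omega> i) (xi t i \<omega>) - gf i (aX xi t \<omega> i)))^2"
proof -
  have s: "(\<Sum>i\<in>UNIV. aY xi (Suc t) \<omega> i) = (\<Sum>i\<in>UNIV. G i (aX xi t \<omega> i) (xi t i \<omega>))"
    using sum_YG[of xi "Suc t" \<omega>] by (simp add: aG_Suc)
  show ?thesis unfolding aX_Suc[of xi t \<omega>]
    by (rule core[OF W_nonneg W_rows W_cols aX_D s])
qed

end

context alg begin

lemma Q_meas: "Q \<in> borel_measurable borel" by (rule borel_measurable_continuous_onI[OF Q_cont])
lemma P_meas: "P \<in> borel_measurable borel" by (rule borel_measurable_continuous_onI[OF P_cont])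
lemma env_meas: "env \<in> borel_measurable borel" by (rule borel_measurable_continuous_onI[OF env_cont])

lemma alg_meas:
  assumes Gm: "\<And>i. (\<lambda>(x, s). G i x s) \<in> borel_measurable (borel \<Otimes>\<^sub>M S)"
    and ys: "\<And>s j. s < t \<Longrightarrow> ys s j \<in> N \<rightarrow>\<^sub>M S"
  shows "(\<lambda>\<omega>. aX ys t \<omega> i) \<in> borel_measurable N \<and> (\<lambda>\<omega>. aY ys t \<omega> i) \<in> borel_measurable N
       \<and> (\<lambda>\<omega>. aG ys t \<omega> i) \<in> borel_measurable N"
  using ys
proof (induction t arbitrary: i)
  case 0 then show ?case by (simp add: aX_0 aY_0 aG_0)
next
  case (Suc t)
  have IH: "(\<lambda>\<omega>. aX ys t \<omega> j) \<in> borel_measurable N" "(\<lambda>\<omega>. aY ys t \<omega> j) \<in> borel_measurable N"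
     "(\<lambda>\<omega>. aG ys t \<omega> j) \<in> borel_measurable N" for j using Suc by auto
  have yt: "ys t j \<in> N \<rightarrow>\<^sub>M S" for j using Suc.prems by auto
  have Gt: "(\<lambda>\<omega>. G j (aX ys t \<omega> j) (ys t j \<omega>)) \<in> borel_measurable N" for j
  proof -
    have "(\<lambda>\<omega>. (aX ys t \<omega> j, ys t j \<omega>)) \<in> N \<rightarrow>\<^sub>M borel \<Otimes>\<^sub>M S"
      using IH(1)[of j] yt[of j] by (rule measurable_Pair)
    from measurable_compose[OF this Gm[of j]] show ?thesis by simp
  qed
  have Yn: "(\<lambda>\<omega>. aY ys (Suc t) \<omega> j) \<in> borel_measurable N" for j
    unfolding aY_Suc using IH Gt by measurable
  have Xn: "(\<lambda>\<omega>. aX ys (Suc t) \<omega> i) \<in> borel_measurable N"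
  proof -
    have "(\<lambda>\<omega>. Q (aX ys t \<omega> j - \<eta> *\<^sub>R aY ys (Suc t) \<omega> j)) \<in> borel_measurable N" for j
      using measurable_compose[OF _ Q_meas] IH(1) Yn by measurable
    then show ?thesis unfolding aX_Suc by measurable
  qed
  show ?case using Xn Yn Gt by (simp add: aG_Suc)
qed

end

locale palg = alg r f gf \<phi> L \<eta> lam W G x0 for r :: "'a::euclidean_space \<Rightarrow> ereal" and f :: "'n::finite \<Rightarrow> 'a \<Rightarrow> real"
    and gf \<phi> L \<eta> lam W and G :: "'n \<Rightarrow> 'a \<Rightarrow> 'b \<Rightarrow> 'a" and x0 +
  fixes M :: "'w measure" and S :: "'b measure" and Dd :: "'n \<Rightarrow> 'b measure"
    and xi :: "nat \<Rightarrow> 'n \<Rightarrow> 'w \<Rightarrow> 'b" and \<sigma> :: real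
  assumes M_prob: "prob_space M"
    and xi_distr: "\<And>t i. distr M S (xi t i) = Dd i"
    and xi_indep: "prob_space.indep_vars M (\<lambda>_. S) (\<lambda>(t, i). xi t i) UNIV"
    and G_meas: "\<And>i. (\<lambda>(x, s). G i x s) \<in> borel_measurable (borel \<Otimes>\<^sub>M S)"
    and G_unbiased: "\<And>i x. x \<in> edom r \<Longrightarrow> has_bochner_integral (Dd i) (G i x) (gf i x)"
    and G_var: "\<And>i x. x \<in> edom r \<Longrightarrow> (\<integral>\<^sup>+ s. ennreal (norm (G i x s - gf i x)^2) \<partial>(Dd i)) \<le> ennreal (\<sigma>^2)"
begin

lemma xi_meas: "xi t i \<in> M \<rightarrow>\<^sub>M S"
  using xi_indep unfolding prob_space.indep_vars_def[OF M_prob] by auto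

lemma Dd_prob: "prob_space (Dd i)"
  using prob_space.prob_space_distr[OF M_prob xi_meas[of 0 i]] xi_distr[of 0 i] by simp

lemma sets_Dd: "sets (Dd i) = sets S"
  using xi_distr[of 0 i] by (metis sets_distr)

lemma gf_meas:
  assumes Ym: "Y \<in> borel_measurable N" and YD: "\<And>\<omega>. \<omega> \<in> space N \<Longrightarrow> Y \<omega> \<in> D"
  shows "(\<lambda>\<omega>. gf i (Y \<omega>)) \<in> borel_measurable N"
proof -
  have sf: "sigma_finite_measure (Dd i)" by (rule prob_space_imp_sigma_finite[OF Dd_prob])
  have E: "N \<Otimes>\<^sub>M Dd i \<rightarrow>\<^sub>M borel \<Otimes>\<^sub>M S = N \<Otimes>\<^sub>M S \<rightarrow>\<^sub>M borel \<Otimes>\<^sub>M S"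
    by (rule measurable_cong_sets) (auto intro: sets_pair_measure_cong simp: sets_Dd)
  have YY: "(\<lambda>p. (Y (fst p), snd p)) \<in> N \<Otimes>\<^sub>M S \<rightarrow>\<^sub>M borel \<Otimes>\<^sub>M S" using Ym by measurable
  have "(\<lambda>p. (Y (fst p), snd p)) \<in> N \<Otimes>\<^sub>M Dd i \<rightarrow>\<^sub>M borel \<Otimes>\<^sub>M S" by (subst E) (rule YY)
  from measurable_compose[OF this G_meas[of i]]
  have "(\<lambda>(\<omega>, s). G i (Y \<omega>) s) \<in> borel_measurable (N \<Otimes>\<^sub>M Dd i)" by (simp add: case_prod_beta)
  from sigma_finite_measure.borel_measurable_lebesgue_integral[OF sf this]
  have m: "(\<lambda>\<omega>. \<integral>s. G i (Y \<omega>) s \<partial>Dd i) \<in> borel_measurable N" .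
  show ?thesis
  proof (rule measurable_cong[THEN iffD1, OF _ m])
    fix \<omega> assume "\<omega> \<in> space N"
    then show "(\<integral>s. G i (Y \<omega>) s \<partial>Dd i) = gf i (Y \<omega>)"
      using G_unbiased[OF YD] by (simp add: has_bochner_integral_integral_eq)
  qed
qed

end

context palg begin

definition "Kt t = {(s, j::'n). s < t}"
definition "UU K \<omega> = (\<lambda>p\<in>K. (\<lambda>(t, i). xi t i) p \<omega>)"
definition "xiv s j u = u (s, j)"
abbreviation "PK K \<equiv> Pi\<^sub>M K (\<lambda>_. S)"

lemma UU_meas: "UU K \<in> M \<rightarrow>\<^sub>M PK K"
  unfolding UU_def by (rule measurable_restrict) (auto simp: xi_meas split: prod.splits)

lemma xiv_meas: "(s, j) \<in> K \<Longrightarrow> xiv s j \<in> PK K \<rightarrow>\<^sub>M S"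
  unfolding xiv_def by (rule measurable_component_singleton)

lemma UU_at: "p \<in> K \<Longrightarrow> UU K \<omega> p = xi (fst p) (snd p) \<omega>"
  unfolding UU_def by (auto split: prod.splits)

lemma cong_UU: assumes "Kt t \<subseteq> K"
  shows "aX xiv t (UU K \<omega>) = aX xi t \<omega>" "aY xiv t (UU K \<omega>) = aY xi t \<omega>" "aG xiv t (UU K \<omega>) = aG xi t \<omega>"
proof -
  have "dprox_state W G r \<eta> x0 xiv t (UU K \<omega>) = dprox_state W G r \<eta> x0 xi t \<omega>"
  proof (rule st_cong)
    fix s j assume "s < t"
    then have "(s, j) \<in> K" using assms Kt_def by auto
    then show "xiv s j (UU K \<omega>) = xi s j \<omega>" unfolding xiv_def by (simp add: UU_at)
  qed
  then show "aX xiv t (UU K \<omega>) = aX xi t \<omega>" "aY xiv t (UU K \<omega>) = aY xi t \<omega>" "aG xiv t (UU K \<omega>) = aG xi t \<omega>"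
    unfolding aX_def aY_def aG_def by simp_all
qed

lemma state_meas_PK: assumes "Kt t \<subseteq> K"
  shows "(\<lambda>u. aX xiv t u i) \<in> borel_measurable (PK K)" "(\<lambda>u. aY xiv t u i) \<in> borel_measurable (PK K)"
    "(\<lambda>u. aG xiv t u i) \<in> borel_measurable (PK K)"
proof -
  have "xiv s j \<in> PK K \<rightarrow>\<^sub>M S" if "s < t" for s j using assms that Kt_def by (intro xiv_meas) auto
  from alg_meas[OF G_meas this] show "(\<lambda>u. aX xiv t u i) \<in> borel_measurable (PK K)" "(\<lambda>u. aY xiv t u i) \<in> borel_measurable (PK K)"
    "(\<lambda>u. aG xiv t u i) \<in> borel_measurable (PK K)" by auto
qed

lemma state_meas_M:
  shows "(\<lambda>\<omega>. aX xi t \<omega> i) \<in> borel_measurable M" "(\<lambda>\<omega>. aY xi t \<omega> i) \<in> borel_measurable M"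
    "(\<lambda>\<omega>. aG xi t \<omega> i) \<in> borel_measurable M"
proof -
  have "\<And>s j. s < t \<Longrightarrow> xi s j \<in> M \<rightarrow>\<^sub>M S" using xi_meas by blast
  from alg_meas[OF G_meas this, where i = i] show "(\<lambda>\<omega>. aX xi t \<omega> i) \<in> borel_measurable M" "(\<lambda>\<omega>. aY xi t \<omega> i) \<in> borel_measurable M"
    "(\<lambda>\<omega>. aG xi t \<omega> i) \<in> borel_measurable M" by auto
qed

lemma indep_UU: assumes "(t, k) \<notin> K"
  shows "prob_space.indep_var M (PK K) (UU K) (PK {(t, k)}) (UU {(t, k)})"
  unfolding UU_def using prob_space.indep_var_restrict[OF M_prob xi_indep, of K "{(t, k)}"] assms by auto

lemma single_int:
  fixes H :: "'b \<Rightarrow> 'a"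
  assumes Hm: "H \<in> borel_measurable S" and hb: "has_bochner_integral (Dd k) H x"
  shows "has_bochner_integral (distr M (PK {(t, k)}) (UU {(t, k)})) (\<lambda>v. H (v (t, k))) x"
proof -
  have m: "(\<lambda>v. H (v (t, k))) \<in> borel_measurable (PK {(t, k)})"
    using measurable_compose[OF measurable_component_singleton[of "(t, k)" "{(t, k)}" "\<lambda>_. S"] Hm] by simp
  have "integrable (distr M S (xi t k)) H" "integral\<^sup>L (distr M S (xi t k)) H = x"
    using hb xi_distr[of t k] by (auto simp: has_bochner_integral_iff)
  then have "integrable M (\<lambda>\<omega>. H (xi t k \<omega>))" "(\<integral>\<omega>. H (xi t k \<omega>) \<partial>M) = x"
    using integrable_distr_eq[OF xi_meas Hm] integral_distr[OF xi_meas Hm] by auto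
  then have h3: "has_bochner_integral M (\<lambda>\<omega>. H (UU {(t, k)} \<omega> (t, k))) x"
    by (simp add: UU_at has_bochner_integral_iff)
  show ?thesis by (rule has_bochner_integral_distr[OF m UU_meas]) (use h3 in simp)
qed

lemma single_nn:
  fixes H :: "'b \<Rightarrow> ennreal"
  assumes Hm: "H \<in> borel_measurable S"
  shows "(\<integral>\<^sup>+ v. H (v (t, k)) \<partial>distr M (PK {(t, k)}) (UU {(t, k)})) = (\<integral>\<^sup>+ s. H s \<partial>Dd k)"
proof -
  have m: "(\<lambda>v. H (v (t, k))) \<in> borel_measurable (PK {(t, k)})"
    using measurable_compose[OF measurable_component_singleton[of "(t, k)" "{(t, k)}" "\<lambda>_. S"] Hm] by simp
  have "(\<integral>\<^sup>+ v. H (v (t, k)) \<partial>distr M (PK {(t, k)}) (UU {(t, k)})) = (\<integral>\<^sup>+ \<omega>. H (UU {(t, k)} \<omega> (t, k)) \<partial>M)"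
    by (rule nn_integral_distr[OF UU_meas]) (use m in simp)
  also have "\<dots> = (\<integral>\<^sup>+ \<omega>. H (xi t k \<omega>) \<partial>M)" by (simp add: UU_at)
  also have "\<dots> = (\<integral>\<^sup>+ s. H s \<partial>distr M S (xi t k))" by (rule nn_integral_distr[OF xi_meas, symmetric]) (simp add: Hm)
  finally show ?thesis using xi_distr by simp
qed

end


context palg begin

lemma kern_app:
  fixes C :: "(nat \<times> 'n \<Rightarrow> 'b) \<Rightarrow> 'a"
  assumes K: "Kt t \<subseteq> K" "(t, k) \<notin> K"
    and Cm: "C \<in> borel_measurable (PK K)" and Csq: "integrable M (\<lambda>\<omega>. norm (C (UU K \<omega>))^2)"
  shows "(\<integral>\<^sup>+\<omega>. ennreal (norm (G k (aX xi t \<omega> k) (xi t k \<omega>) - gf k (aX xi t \<omega> k))^2) \<partial>M) \<le> ennreal (\<sigma>^2)"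
    "integrable M (\<lambda>\<omega>. C (UU K \<omega>) \<bullet> (G k (aX xi t \<omega> k) (xi t k \<omega>) - gf k (aX xi t \<omega> k)))"
    "(\<integral>\<omega>. C (UU K \<omega>) \<bullet> (G k (aX xi t \<omega> k) (xi t k \<omega>) - gf k (aX xi t \<omega> k)) \<partial>M) = 0"
proof -
  define J where "J = {(t, k)}"
  define c where "c u = aX xiv t u k" for u
  define h where "h u v = G k (c u) (v (t, k)) - gf k (c u)" for u v
  have e_eq: "G k (aX xi t \<omega> k) (xi t k \<omega>) - gf k (aX xi t \<omega> k) = h (UU K \<omega>) (UU J \<omega>)" for \<omega>
    unfolding h_def c_def cong_UU[OF K(1)] J_def by (simp add: UU_at)
  have cm: "c \<in> borel_measurable (PK K)" unfolding c_def by (rule state_meas_PK[OF K(1)])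
  have cD: "c u \<in> D" for u unfolding c_def by (rule aX_D)
  have hm: "(\<lambda>(u, v). h u v) \<in> borel_measurable (PK K \<Otimes>\<^sub>M PK J)"
  proof -
    have c1: "(\<lambda>p. c (fst p)) \<in> borel_measurable (PK K \<Otimes>\<^sub>M PK J)" using cm by measurable
    have c2: "(\<lambda>p. snd p (t, k)) \<in> PK K \<Otimes>\<^sub>M PK J \<rightarrow>\<^sub>M S"
      using measurable_compose[OF measurable_snd measurable_component_singleton[of "(t, k)" J "\<lambda>_. S"]] J_def by simp
    have "(\<lambda>p. (c (fst p), snd p (t, k))) \<in> PK K \<Otimes>\<^sub>M PK J \<rightarrow>\<^sub>M borel \<Otimes>\<^sub>M S"
      using c1 c2 by (rule measurable_Pair)
    from measurable_compose[OF this G_meas[of k]]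
    have g1: "(\<lambda>p. G k (c (fst p)) (snd p (t, k))) \<in> borel_measurable (PK K \<Otimes>\<^sub>M PK J)" by simp
    have g2: "(\<lambda>p. gf k (c (fst p))) \<in> borel_measurable (PK K \<Otimes>\<^sub>M PK J)"
      by (rule gf_meas[OF c1 cD])
    have "(\<lambda>p. G k (c (fst p)) (snd p (t, k)) - gf k (c (fst p))) \<in> borel_measurable (PK K \<Otimes>\<^sub>M PK J)"
      using g1 g2 by (rule borel_measurable_diff)
    then show ?thesis unfolding h_def by (simp add: case_prod_beta)
  qed
  have Hm: "(\<lambda>s. G k (c u) s - gf k (c u)) \<in> borel_measurable S" for u
  proof -
    have "(\<lambda>s. (c u, s)) \<in> S \<rightarrow>\<^sub>M borel \<Otimes>\<^sub>M S" by measurable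
    from measurable_compose[OF this G_meas[of k]] have "(\<lambda>s. G k (c u) s) \<in> borel_measurable S" by simp
    then show ?thesis by measurable
  qed
  have Dkp: "prob_space (distr M (PK J) (UU J))" by (rule prob_space.prob_space_distr[OF M_prob UU_meas])
  have hmean: "has_bochner_integral (distr M (PK J) (UU J)) (h u) 0" for u
  proof -
    interpret Dk: prob_space "Dd k" by (rule Dd_prob)
    have "has_bochner_integral (Dd k) (\<lambda>_. gf k (c u)) (gf k (c u))"
      by (simp add: has_bochner_integral_iff Dk.prob_space)
    from has_bochner_integral_diff[OF G_unbiased[OF cD[of u]] this]
    have "has_bochner_integral (Dd k) (\<lambda>s. G k (c u) s - gf k (c u)) 0" by simp
    from single_int[OF Hm this, of t] show ?thesis unfolding h_def J_def .
  qed
  have hvar: "(\<integral>\<^sup>+ v. ennreal (norm (h u v)^2) \<partial>distr M (PK J) (UU J)) \<le> ennreal (\<sigma>^2)" for u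
  proof -
    have Hm2: "(\<lambda>s. ennreal (norm (G k (c u) s - gf k (c u))^2)) \<in> borel_measurable S" using Hm[of u] by measurable
    have "(\<integral>\<^sup>+ v. ennreal (norm (h u v)^2) \<partial>distr M (PK J) (UU J)) = (\<integral>\<^sup>+ s. ennreal (norm (G k (c u) s - gf k (c u))^2) \<partial>Dd k)"
      unfolding h_def J_def by (rule single_nn[OF Hm2])
    also have "\<dots> \<le> ennreal (\<sigma>^2)" by (rule G_var[OF cD])
    finally show ?thesis .
  qed
  have hmean': "\<And>u. u \<in> space (PK K) \<Longrightarrow> has_bochner_integral (distr M (PK {(t, k)}) (UU {(t, k)})) (h u) 0"
    using hmean unfolding J_def by blast
  have hvar': "\<And>u. u \<in> space (PK K) \<Longrightarrow> (\<integral>\<^sup>+ v. ennreal (norm (h u v)^2) \<partial>distr M (PK {(t, k)}) (UU {(t, k)})) \<le> ennreal (\<sigma>^2)"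
    using hvar unfolding J_def by blast
  note k1 = kernel[OF M_prob indep_UU[OF K(2)] refl Dkp[unfolded J_def]]
  note k2 = k1[OF hm[unfolded J_def]]
  note k3 = k2[OF hmean[unfolded J_def]]
  note k4 = k3[OF hvar[unfolded J_def]]
  note kk = k4[OF Cm Csq]
  show "(\<integral>\<^sup>+\<omega>. ennreal (norm (G k (aX xi t \<omega> k) (xi t k \<omega>) - gf k (aX xi t \<omega> k))^2) \<partial>M) \<le> ennreal (\<sigma>^2)"
    using kk(1) unfolding e_eq J_def .
  show "integrable M (\<lambda>\<omega>. C (UU K \<omega>) \<bullet> (G k (aX xi t \<omega> k) (xi t k \<omega>) - gf k (aX xi t \<omega> k)))"
    using kk(2) unfolding e_eq J_def .
  show "(\<integral>\<omega>. C (UU K \<omega>) \<bullet> (G k (aX xi t \<omega> k) (xi t k \<omega>) - gf k (aX xi t \<omega> k)) \<partial>M) = 0"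
    using kk(3) unfolding e_eq J_def .
qed

end


context palg begin

lemma FM: "finite_measure M" by (rule prob_space.finite_measure[OF M_prob])

lemma sqi_gf: assumes Y: "sqi M Y" and YD: "\<And>\<omega>. Y \<omega> \<in> D" shows "sqi M (\<lambda>\<omega>. gf i (Y \<omega>))"
proof (rule sqi_bound[OF FM Y])
  show "(\<lambda>\<omega>. gf i (Y \<omega>)) \<in> borel_measurable M" by (rule gf_meas[OF sqi_meas[OF Y] YD])
  define p where "p = x0 i"
  have pD: "p \<in> D" unfolding p_def by (rule x0_dom)
  show "norm (gf i (Y \<omega>)) \<le> (norm (gf i p) + L * norm p) + L * norm (Y \<omega>)" for \<omega>
  proof -
    have "norm (gf i (Y \<omega>)) \<le> norm (gf i p) + norm (gf i (Y \<omega>) - gf i p)" by (rule norm_triangle_sub)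
    also have "norm (gf i (Y \<omega>) - gf i p) \<le> L * norm (Y \<omega> - p)" by (rule f_smooth[OF YD pD])
    also have "norm (Y \<omega> - p) \<le> norm (Y \<omega>) + norm p" by (rule norm_triangle_ineq4)
    finally show ?thesis using L_pos by (simp add: algebra_simps mult_left_mono)
  qed
  show "0 \<le> norm (gf i p) + L * norm p" using L_pos by simp
qed (use L_pos in simp)

lemma sqi_Q: assumes w: "sqi M w" shows "sqi M (\<lambda>\<omega>. Q (w \<omega>))"
proof (rule sqi_bound[OF FM w, where a = "norm (Q 0)" and b = 1])
  show "(\<lambda>\<omega>. Q (w \<omega>)) \<in> borel_measurable M" using measurable_compose[OF sqi_meas[OF w] Q_meas] by simp
  show "norm (Q (w \<omega>)) \<le> norm (Q 0) + 1 * norm (w \<omega>)" for \<omega>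
    using norm_triangle_sub[of "Q (w \<omega>)" "Q 0"] Q_nonexp[of "w \<omega>" 0] by simp
qed auto

lemma sqi_P: assumes w: "sqi M w" shows "sqi M (\<lambda>\<omega>. P (w \<omega>))"
proof (rule sqi_bound[OF FM w, where a = "norm (P 0)" and b = "4/3"])
  show "(\<lambda>\<omega>. P (w \<omega>)) \<in> borel_measurable M" using measurable_compose[OF sqi_meas[OF w] P_meas] by simp
  show "norm (P (w \<omega>)) \<le> norm (P 0) + 4/3 * norm (w \<omega>)" for \<omega>
    using norm_triangle_sub[of "P (w \<omega>)" "P 0"] P_lip[of "w \<omega>" 0] by simp
qed auto

definition "ee t k \<omega> = G k (aX xi t \<omega> k) (xi t k \<omega>) - gf k (aX xi t \<omega> k)"

lemma ee_meas: "ee t k \<in> borel_measurable M"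
proof -
  have "(\<lambda>\<omega>. (aX xi t \<omega> k, xi t k \<omega>)) \<in> M \<rightarrow>\<^sub>M borel \<Otimes>\<^sub>M S"
    using state_meas_M(1)[of t k] xi_meas[of t k] by (rule measurable_Pair)
  from measurable_compose[OF this G_meas[of k]]
  have "(\<lambda>\<omega>. G k (aX xi t \<omega> k) (xi t k \<omega>)) \<in> borel_measurable M" by simp
  moreover have "(\<lambda>\<omega>. gf k (aX xi t \<omega> k)) \<in> borel_measurable M" by (rule gf_meas[OF state_meas_M(1) aX_D])
  ultimately show ?thesis unfolding ee_def by (rule borel_measurable_diff)
qed

lemma ee_var: "(\<integral>\<^sup>+\<omega>. ennreal (norm (ee t k \<omega>)^2) \<partial>M) \<le> ennreal (\<sigma>^2)"
proof -
  have "(t, k) \<notin> Kt t" unfolding Kt_def by simp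
  from kern_app(1)[OF order_refl this, of "\<lambda>_. 0"] show ?thesis unfolding ee_def by simp
qed

lemma ee_sqi: "sqi M (ee t k)"
proof -
  have "integrable M (\<lambda>\<omega>. norm (ee t k \<omega>)^2)"
  proof (rule integrableI_nonneg)
    show "(\<lambda>\<omega>. norm (ee t k \<omega>)^2) \<in> borel_measurable M" using ee_meas by measurable
    have "ennreal (\<sigma>^2) < \<infinity>" by simp
    then show "(\<integral>\<^sup>+ x. ennreal (norm (ee t k x)^2) \<partial>M) < \<infinity>" using ee_var by (rule le_less_trans[rotated])
  qed simp
  then show ?thesis unfolding sqi_def using ee_meas by simp
qed

lemma ee_int: "(\<integral>\<omega>. norm (ee t k \<omega>)^2 \<partial>M) \<le> \<sigma>^2"
proof -
  have "ennreal (\<integral>\<omega>. norm (ee t k \<omega>)^2 \<partial>M) = (\<integral>\<^sup>+\<omega>. ennreal (norm (ee t k \<omega>)^2) \<partial>M)"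
    by (rule nn_integral_eq_integral[symmetric]) (use sqi_integrable_sq[OF ee_sqi] in auto)
  also have "\<dots> \<le> ennreal (\<sigma>^2)" by (rule ee_var)
  finally show ?thesis by (auto simp: ennreal_le_iff2)
qed

lemma sqi_state: "sqi M (\<lambda>\<omega>. aX xi t \<omega> i) \<and> sqi M (\<lambda>\<omega>. aY xi t \<omega> i) \<and> sqi M (\<lambda>\<omega>. aG xi t \<omega> i)"
proof (induction t arbitrary: i)
  case 0 then show ?case by (simp add: aX_0 aY_0 aG_0 sqi_const[OF FM])
next
  case (Suc t)
  have IH: "sqi M (\<lambda>\<omega>. aX xi t \<omega> j)" "sqi M (\<lambda>\<omega>. aY xi t \<omega> j)" "sqi M (\<lambda>\<omega>. aG xi t \<omega> j)" for j
    using Suc by auto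
  have Gn: "sqi M (\<lambda>\<omega>. G j (aX xi t \<omega> j) (xi t j \<omega>))" for j
  proof -
    have "sqi M (\<lambda>\<omega>. ee t j \<omega> + gf j (aX xi t \<omega> j))"
      by (rule sqi_add[OF FM ee_sqi sqi_gf[OF IH(1) aX_D]])
    then show ?thesis unfolding ee_def by simp
  qed
  have Yn: "sqi M (\<lambda>\<omega>. aY xi (Suc t) \<omega> j)" for j
    unfolding aY_Suc
    by (intro sqi_sum[OF FM] sqi_scale[OF FM] sqi_diff[OF FM] sqi_add[OF FM] IH Gn) auto
  have Xn: "sqi M (\<lambda>\<omega>. aX xi (Suc t) \<omega> i)"
    unfolding aX_Suc
    by (intro sqi_sum[OF FM] sqi_scale[OF FM] sqi_Q sqi_diff[OF FM] IH Yn) auto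
  show ?case using Xn Yn Gn by (simp add: aG_Suc)
qed

end


context palg begin

lemma Bv_meas:
  assumes Ym: "\<And>j. (\<lambda>\<omega>. Y \<omega> j) \<in> borel_measurable N" and YD: "\<And>\<omega> j. Y \<omega> j \<in> D"
  shows "(\<lambda>\<omega>. Bv (Y \<omega>)) \<in> borel_measurable N"
proof -
  have g1: "(\<lambda>\<omega>. gf k (Y \<omega> j)) \<in> borel_measurable N" for k j by (rule gf_meas[OF Ym YD])
  have Pm: "(\<lambda>\<omega>. P (Y \<omega> j)) \<in> borel_measurable N" for j using measurable_compose[OF Ym P_meas] by simp
  have g2: "(\<lambda>\<omega>. gf k (P (Y \<omega> j))) \<in> borel_measurable N" for k j by (rule gf_meas[OF Pm P_min(1)])
  show ?thesis unfolding Bv_def gb_def gF_def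
    by (intro borel_measurable_scaleR borel_measurable_sum borel_measurable_add borel_measurable_diff borel_measurable_const g1 g2 Pm Ym)
qed

lemma Bv_sqi:
  assumes Y: "\<And>j. sqi M (\<lambda>\<omega>. Y \<omega> j)" and YD: "\<And>\<omega> j. Y \<omega> j \<in> D"
  shows "sqi M (\<lambda>\<omega>. Bv (Y \<omega>))"
  unfolding Bv_def gb_def gF_def
  by (intro sqi_scale[OF FM] sqi_sum[OF FM] sqi_add[OF FM] sqi_diff[OF FM] sqi_gf sqi_P Y YD P_min(1)) auto

lemma E1: "integrable M (\<lambda>\<omega>. Bv (aX xi t \<omega>) \<bullet> ee t k \<omega>)" "(\<integral>\<omega>. Bv (aX xi t \<omega>) \<bullet> ee t k \<omega> \<partial>M) = 0"
proof -
  have nk: "(t, k) \<notin> Kt t" unfolding Kt_def by simp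
  have Cm: "(\<lambda>u. Bv (aX xiv t u)) \<in> borel_measurable (PK (Kt t))"
    by (rule Bv_meas[OF state_meas_PK(1)[OF order_refl] aX_D])
  have "sqi M (\<lambda>\<omega>. Bv (aX xi t \<omega>))" by (rule Bv_sqi[OF _ aX_D]) (use sqi_state in blast)
  then have Csq: "integrable M (\<lambda>\<omega>. norm (Bv (aX xiv t (UU (Kt t) \<omega>)))^2)"
    unfolding cong_UU[OF order_refl] by (rule sqi_integrable_sq)
  note kk = kern_app[OF order_refl nk Cm Csq]
  show "integrable M (\<lambda>\<omega>. Bv (aX xi t \<omega>) \<bullet> ee t k \<omega>)" using kk(2) unfolding cong_UU[OF order_refl] ee_def .
  show "(\<integral>\<omega>. Bv (aX xi t \<omega>) \<bullet> ee t k \<omega> \<partial>M) = 0" using kk(3) unfolding cong_UU[OF order_refl] ee_def .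
qed

lemma E2: assumes jk: "j \<noteq> k" shows "(\<integral>\<omega>. ee t j \<omega> \<bullet> ee t k \<omega> \<partial>M) = 0"
proof -
  define K where "K = insert (t, j) (Kt t)"
  have KK: "Kt t \<subseteq> K" unfolding K_def by auto
  have nk: "(t, k) \<notin> K" unfolding K_def Kt_def using jk by simp
  define C where "C u = G j (aX xiv t u j) (u (t, j)) - gf j (aX xiv t u j)" for u
  have Cm: "C \<in> borel_measurable (PK K)"
  proof -
    have c1: "(\<lambda>u. aX xiv t u j) \<in> borel_measurable (PK K)" by (rule state_meas_PK(1)[OF KK])
    have c2: "(\<lambda>u. u (t, j)) \<in> PK K \<rightarrow>\<^sub>M S" by (rule measurable_component_singleton) (simp add: K_def)
    have "(\<lambda>u. (aX xiv t u j, u (t, j))) \<in> PK K \<rightarrow>\<^sub>M borel \<Otimes>\<^sub>M S" using c1 c2 by (rule measurable_Pair)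
    from measurable_compose[OF this G_meas[of j]]
    have "(\<lambda>u. G j (aX xiv t u j) (u (t, j))) \<in> borel_measurable (PK K)" by simp
    moreover have "(\<lambda>u. gf j (aX xiv t u j)) \<in> borel_measurable (PK K)" by (rule gf_meas[OF c1 aX_D])
    ultimately show ?thesis unfolding C_def by (rule borel_measurable_diff)
  qed
  have CU: "C (UU K \<omega>) = ee t j \<omega>" for \<omega>
    unfolding C_def ee_def cong_UU[OF KK] by (simp add: UU_at K_def)
  have Csq: "integrable M (\<lambda>\<omega>. norm (C (UU K \<omega>))^2)" unfolding CU by (rule sqi_integrable_sq[OF ee_sqi])
  note kk = kern_app[OF KK nk Cm Csq]
  show ?thesis using kk(3) unfolding CU ee_def .
qed

lemma env_int: assumes Y: "sqi M Y" shows "integrable M (\<lambda>\<omega>. env (Y \<omega>))"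
proof -
  obtain c where c: "\<And>x. x \<in> D \<Longrightarrow> c \<le> Fb x + R x" using obtain_c by blast
  obtain p where p: "p \<in> D" using cpc_ex[OF r_cvx] by blast
  define A where "A = \<bar>c\<bar> + \<bar>Fb p + R p\<bar> + norm p ^ 2 / lam"
  have maj: "integrable M (\<lambda>\<omega>. A + (1 / lam) * norm (Y \<omega>)^2)"
    using sqi_integrable_sq[OF Y] by (intro Bochner_Integration.integrable_add integrable_mult_right) (auto intro: finite_measure.integrable_const[OF FM])
  show ?thesis
  proof (rule Bochner_Integration.integrable_bound[OF maj])
    show "(\<lambda>\<omega>. env (Y \<omega>)) \<in> borel_measurable M" using measurable_compose[OF sqi_meas[OF Y] env_meas] by simp
    show "AE \<omega> in M. norm (env (Y \<omega>)) \<le> norm (A + (1 / lam) * norm (Y \<omega>)^2)"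
    proof (rule AE_I2)
      fix \<omega>
      define y where "y = Y \<omega>"
      have lo: "env y \<ge> c" using env_eq[of y] c[OF P_min(1)[of y]] lam_pos by (simp add: add_increasing2)
      have "env y \<le> Fb p + R p + norm (p - y)^2 / (2 * lam)" by (rule env_le[OF p])
      also have "norm (p - y)^2 \<le> 2 * norm p ^ 2 + 2 * norm y ^ 2"
        using norm_add_sq_le[of p "- y"] by simp
      then have "norm (p - y)^2 / (2 * lam) \<le> (2 * norm p ^ 2 + 2 * norm y ^ 2) / (2 * lam)"
        using lam_pos by (intro divide_right_mono) auto
      also have "(2 * norm p ^ 2 + 2 * norm y ^ 2) / (2 * lam) = norm p ^ 2 / lam + (1 / lam) * norm y ^ 2"
        using lam_pos by (simp add: field_simps)
      finally have up: "env y \<le> Fb p + R p + (norm p ^ 2 / lam + (1 / lam) * norm y ^ 2)" by simp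
      have "0 \<le> (1 / lam) * norm y ^ 2" using lam_pos by simp
      moreover have "0 \<le> norm p ^ 2 / lam" using lam_pos by simp
      ultimately have "\<bar>env y\<bar> \<le> A + (1 / lam) * norm y ^ 2" using lo up unfolding A_def by linarith
      then show "norm (env (Y \<omega>)) \<le> norm (A + (1 / lam) * norm (Y \<omega>)^2)" unfolding y_def by simp
    qed
  qed
qed

lemma perp_int: fixes Y :: "'w \<Rightarrow> 'n \<Rightarrow> 'a" assumes Y: "\<And>i. sqi M (\<lambda>\<omega>. Y \<omega> i)" shows "integrable M (\<lambda>\<omega>. perp_sq (Y \<omega>))"
  unfolding perp_sq_def
  by (intro Bochner_Integration.integrable_sum sqi_integrable_sq sqi_diff[OF FM] sqi_scale[OF FM] sqi_sum[OF FM] Y) auto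

lemma proxsq_int: fixes Y :: "'w \<Rightarrow> 'n \<Rightarrow> 'a" assumes Y: "\<And>i. sqi M (\<lambda>\<omega>. Y \<omega> i)"
  shows "integrable M (\<lambda>\<omega>. \<Sum>i\<in>UNIV. norm (P (Y \<omega> i) - Y \<omega> i)^2)"
  by (intro Bochner_Integration.integrable_sum sqi_integrable_sq sqi_diff[OF FM] sqi_P Y)

end


context palg begin

lemma sqX: "sqi M (\<lambda>\<omega>. aX xi t \<omega> i)" and sqY: "sqi M (\<lambda>\<omega>. aY xi t \<omega> i)"
  using sqi_state by blast+

lemma eb_sq_int:
  "(\<integral>\<omega>. norm ((1 / real CARD('n)) *\<^sub>R (\<Sum>k\<in>UNIV. ee t k \<omega>))^2 \<partial>M) \<le> \<sigma>^2 / real CARD('n)"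
proof -
  define N where "N = real CARD('n)"
  have N0: "N > 0" unfolding N_def by simp
  have ij: "integrable M (\<lambda>\<omega>. ee t j \<omega> \<bullet> ee t k \<omega>)" for j k by (rule sqi_inner[OF ee_sqi ee_sqi])
  have pw: "norm ((1 / N) *\<^sub>R (\<Sum>k\<in>UNIV. ee t k \<omega>))^2 = (1 / N)^2 * (\<Sum>j\<in>UNIV. \<Sum>k\<in>UNIV. ee t j \<omega> \<bullet> ee t k \<omega>)" for \<omega>
  proof -
    have "norm (\<Sum>k\<in>UNIV. ee t k \<omega>)^2 = (\<Sum>j\<in>UNIV. ee t j \<omega>) \<bullet> (\<Sum>k\<in>UNIV. ee t k \<omega>)" by (simp add: power2_norm_eq_inner)
    also have "\<dots> = (\<Sum>j\<in>UNIV. \<Sum>k\<in>UNIV. ee t j \<omega> \<bullet> ee t k \<omega>)" by (simp add: inner_sum_left inner_sum_right, rule sum.swap)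
    finally have e: "norm (\<Sum>k\<in>UNIV. ee t k \<omega>)^2 = (\<Sum>j\<in>UNIV. \<Sum>k\<in>UNIV. ee t j \<omega> \<bullet> ee t k \<omega>)" .
    have "norm ((1 / N) *\<^sub>R (\<Sum>k\<in>UNIV. ee t k \<omega>))^2 = (1 / N)^2 * norm (\<Sum>k\<in>UNIV. ee t k \<omega>)^2"
      by (simp only: norm_scaleR power_mult_distrib power2_abs)
    then show ?thesis unfolding e .
  qed
  have "(\<integral>\<omega>. norm ((1 / N) *\<^sub>R (\<Sum>k\<in>UNIV. ee t k \<omega>))^2 \<partial>M)
      = (1 / N)^2 * (\<Sum>j\<in>UNIV. \<Sum>k\<in>UNIV. (\<integral>\<omega>. ee t j \<omega> \<bullet> ee t k \<omega> \<partial>M))"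
    unfolding pw using ij by (simp add: Bochner_Integration.integral_sum Bochner_Integration.integrable_sum)
  also have "(\<Sum>j\<in>UNIV. \<Sum>k\<in>UNIV. (\<integral>\<omega>. ee t j \<omega> \<bullet> ee t k \<omega> \<partial>M)) = (\<Sum>j\<in>UNIV. (\<integral>\<omega>. norm (ee t j \<omega>)^2 \<partial>M))"
  proof (rule sum.cong[OF refl])
    fix j
    have "(\<Sum>k\<in>UNIV. (\<integral>\<omega>. ee t j \<omega> \<bullet> ee t k \<omega> \<partial>M)) = (\<Sum>k\<in>UNIV. if k = j then (\<integral>\<omega>. norm (ee t j \<omega>)^2 \<partial>M) else 0)"
      by (rule sum.cong[OF refl]) (auto simp: E2 power2_norm_eq_inner)
    then show "(\<Sum>k\<in>UNIV. (\<integral>\<omega>. ee t j \<omega> \<bullet> ee t k \<omega> \<partial>M)) = (\<integral>\<omega>. norm (ee t j \<omega>)^2 \<partial>M)" by simp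
  qed
  also have "(\<Sum>j\<in>UNIV. (\<integral>\<omega>. norm (ee t j \<omega>)^2 \<partial>M)) \<le> (\<Sum>j\<in>(UNIV::'n set). \<sigma>^2)" by (rule sum_mono[OF ee_int])
  also have "\<dots> = N * \<sigma>^2" unfolding N_def by simp
  finally have "(\<integral>\<omega>. norm ((1 / N) *\<^sub>R (\<Sum>k\<in>UNIV. ee t k \<omega>))^2 \<partial>M) \<le> (1 / N)^2 * (N * \<sigma>^2)"
    using N0 by (simp add: mult_left_mono)
  also have "\<dots> = \<sigma>^2 / N" using N0 by (simp add: power2_eq_square field_simps)
  finally show ?thesis unfolding N_def .
qed

theorem main_palg:
  "(\<Sum>i\<in>UNIV. \<integral>\<omega>. env (aX xi (Suc t) \<omega> i) \<partial>M)
   \<le> (\<Sum>i\<in>UNIV. \<integral>\<omega>. env (aX xi t \<omega> i) \<partial>M) + (4 / lam) * (\<integral>\<omega>. perp_sq (aX xi t \<omega>) \<partial>M)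
     + (4 * \<eta>^2 / lam) * (\<integral>\<omega>. perp_sq (aY xi (Suc t) \<omega>) \<partial>M)
     - (\<eta> / (4 * lam^2)) * (\<integral>\<omega>. (\<Sum>i\<in>UNIV. norm (P (aX xi t \<omega> i) - aX xi t \<omega> i)^2) \<partial>M)
     + \<eta>^2 * \<sigma>^2 / lam"
proof -
  define N where "N = real CARD('n)"
  have N0: "N > 0" unfolding N_def by simp
  define eb where "eb \<omega> = (1 / N) *\<^sub>R (\<Sum>k\<in>UNIV. ee t k \<omega>)" for \<omega>
  define Lf where "Lf \<omega> = (\<Sum>i\<in>UNIV. env (aX xi (Suc t) \<omega> i))" for \<omega>
  define Af where "Af \<omega> = (\<Sum>i\<in>UNIV. env (aX xi t \<omega> i))" for \<omega>
  define Bf where "Bf \<omega> = perp_sq (aX xi t \<omega>)" for \<omega>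
  define Cf where "Cf \<omega> = perp_sq (aY xi (Suc t) \<omega>)" for \<omega>
  define Df where "Df \<omega> = (\<Sum>i\<in>UNIV. norm (P (aX xi t \<omega> i) - aX xi t \<omega> i)^2)" for \<omega>
  define Ef where "Ef \<omega> = Bv (aX xi t \<omega>) \<bullet> eb \<omega>" for \<omega>
  define Ff where "Ff \<omega> = norm (eb \<omega>)^2" for \<omega>
  have pw: "Lf \<omega> \<le> Af \<omega> + (4 / lam) * Bf \<omega> + (4 * \<eta>^2 / lam) * Cf \<omega> - (\<eta> / (4 * lam^2)) * Df \<omega> + Ef \<omega> + (N * \<eta>^2 / lam) * Ff \<omega>" for \<omega>
    using pointwise[of xi t \<omega>] unfolding Lf_def Af_def Bf_def Cf_def Df_def Ef_def Ff_def eb_def ee_def N_def .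
  have iL: "integrable M Lf" unfolding Lf_def by (intro Bochner_Integration.integrable_sum env_int sqX)
  have iA: "integrable M Af" unfolding Af_def by (intro Bochner_Integration.integrable_sum env_int sqX)
  have iB: "integrable M Bf" unfolding Bf_def by (rule perp_int[OF sqX])
  have iC: "integrable M Cf" unfolding Cf_def by (rule perp_int[OF sqY])
  have iD: "integrable M Df" unfolding Df_def by (rule proxsq_int[OF sqX])
  have Ef_eq: "Ef \<omega> = (1 / N) * (\<Sum>k\<in>UNIV. Bv (aX xi t \<omega>) \<bullet> ee t k \<omega>)" for \<omega>
    unfolding Ef_def eb_def by (simp add: inner_sum_right)
  have iE: "integrable M Ef" unfolding Ef_eq
    by (intro integrable_mult_right Bochner_Integration.integrable_sum E1(1))
  have intE: "(\<integral>\<omega>. Ef \<omega> \<partial>M) = 0" unfolding Ef_eq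
    by (simp add: Bochner_Integration.integral_sum E1)
  have sqeb: "sqi M eb" unfolding eb_def by (intro sqi_scale[OF FM] sqi_sum[OF FM] ee_sqi) auto
  have iF: "integrable M Ff" unfolding Ff_def by (rule sqi_integrable_sq[OF sqeb])
  have intF: "(\<integral>\<omega>. Ff \<omega> \<partial>M) \<le> \<sigma>^2 / N" unfolding Ff_def eb_def N_def by (rule eb_sq_int)
  define R where "R \<omega> = Af \<omega> + (4 / lam) * Bf \<omega> + (4 * \<eta>^2 / lam) * Cf \<omega> - (\<eta> / (4 * lam^2)) * Df \<omega> + Ef \<omega> + (N * \<eta>^2 / lam) * Ff \<omega>" for \<omega>
  have iR: "integrable M R" unfolding R_def using iA iB iC iD iE iF
    by (intro Bochner_Integration.integrable_add Bochner_Integration.integrable_diff integrable_mult_right) auto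
  have "(\<integral>\<omega>. Lf \<omega> \<partial>M) \<le> (\<integral>\<omega>. R \<omega> \<partial>M)" by (rule integral_mono[OF iL iR]) (use pw R_def in auto)
  also have "(\<integral>\<omega>. R \<omega> \<partial>M) = (\<integral>\<omega>. Af \<omega> \<partial>M) + (4 / lam) * (\<integral>\<omega>. Bf \<omega> \<partial>M) + (4 * \<eta>^2 / lam) * (\<integral>\<omega>. Cf \<omega> \<partial>M)
      - (\<eta> / (4 * lam^2)) * (\<integral>\<omega>. Df \<omega> \<partial>M) + (\<integral>\<omega>. Ef \<omega> \<partial>M) + (N * \<eta>^2 / lam) * (\<integral>\<omega>. Ff \<omega> \<partial>M)"
    unfolding R_def using iA iB iC iD iE iF
    by (simp add: Bochner_Integration.integral_add Bochner_Integration.integral_diff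
        Bochner_Integration.integrable_add Bochner_Integration.integrable_diff)
  also have "(N * \<eta>^2 / lam) * (\<integral>\<omega>. Ff \<omega> \<partial>M) \<le> (N * \<eta>^2 / lam) * (\<sigma>^2 / N)"
    using intF N0 lam_pos by (intro mult_left_mono) auto
  also have "(N * \<eta>^2 / lam) * (\<sigma>^2 / N) = \<eta>^2 * \<sigma>^2 / lam" using N0 by (simp add: field_simps)
  finally have main: "(\<integral>\<omega>. Lf \<omega> \<partial>M) \<le> (\<integral>\<omega>. Af \<omega> \<partial>M) + (4 / lam) * (\<integral>\<omega>. Bf \<omega> \<partial>M) + (4 * \<eta>^2 / lam) * (\<integral>\<omega>. Cf \<omega> \<partial>M)
      - (\<eta> / (4 * lam^2)) * (\<integral>\<omega>. Df \<omega> \<partial>M) + \<eta>^2 * \<sigma>^2 / lam" using intE by simp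
  have eL: "(\<integral>\<omega>. Lf \<omega> \<partial>M) = (\<Sum>i\<in>UNIV. \<integral>\<omega>. env (aX xi (Suc t) \<omega> i) \<partial>M)"
    unfolding Lf_def by (intro Bochner_Integration.integral_sum env_int sqX)
  have eA: "(\<integral>\<omega>. Af \<omega> \<partial>M) = (\<Sum>i\<in>UNIV. \<integral>\<omega>. env (aX xi t \<omega> i) \<partial>M)"
    unfolding Af_def by (intro Bochner_Integration.integral_sum env_int sqX)
  show ?thesis using main unfolding eL eA Bf_def Cf_def Df_def .
qed

end

theorem lemmaB4:
  fixes M :: "'w measure" and S :: "'b measure" and D :: "'n::finite \<Rightarrow> 'b measure"
    and F :: "'n \<Rightarrow> 'a::euclidean_space \<Rightarrow> 'b \<Rightarrow> real"
    and G :: "'n \<Rightarrow> 'a \<Rightarrow> 'b \<Rightarrow> 'a"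
    and f :: "'n \<Rightarrow> 'a \<Rightarrow> real" and gf :: "'n \<Rightarrow> 'a \<Rightarrow> 'a"
    and r :: "'a \<Rightarrow> ereal" and \<phi> :: "'a \<Rightarrow> ereal"
    and W :: "real^'n^'n" and E :: "'n \<Rightarrow> 'n \<Rightarrow> bool"
    and xi :: "nat \<Rightarrow> 'n \<Rightarrow> 'w \<Rightarrow> 'b" and x0 :: "'n \<Rightarrow> 'a"
    and L \<sigma> \<eta> lam :: real and t :: nat
  assumes
    \<comment> \<open>regularizer: closed (proper) convex\<close>
    r_cvx: "closed_proper_convex r"
    \<comment> \<open>stochastic model: f_i(x) = E[F_i(x,xi_i)], F_i(.,xi) has gradient G_i(.,xi) on dom r\<close>
  and D_prob: "\<And>i. prob_space (D i)"
  and f_def: "\<And>i x. x \<in> edom r \<Longrightarrow> has_bochner_integral (D i) (F i x) (f i x)"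
  and F_grad: "\<And>i x s. x \<in> edom r \<Longrightarrow>
                  ((\<lambda>z. F i z s) has_derivative (\<lambda>h. G i x s \<bullet> h)) (at x within edom r)"
    \<comment> \<open>each f_i is L-smooth on dom r with gradient gf i\<close>
  and L_pos: "L > 0"
  and f_grad: "\<And>i x. x \<in> edom r \<Longrightarrow> (f i has_derivative (\<lambda>h. gf i x \<bullet> h)) (at x within edom r)"
  and f_smooth: "\<And>i x y. x \<in> edom r \<Longrightarrow> y \<in> edom r \<Longrightarrow> norm (gf i x - gf i y) \<le> L * norm (x - y)"
    \<comment> \<open>phi = f + r bounded below\<close>
  and phi_def: "\<And>x. \<phi> x = ereal ((1 / real CARD('n)) * (\<Sum>i\<in>UNIV. f i x)) + r x"
  and phi_lb: "\<exists>c. \<forall>x. ereal c \<le> \<phi> x"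
    \<comment> \<open>mixing matrix on a connected graph\<close>
  and E_sym: "\<And>i j. E i j \<Longrightarrow> E j i"
  and E_conn: "\<And>i j. (i, j) \<in> {(a, b). E a b}\<^sup>*"
  and W_nonneg: "\<And>i j. W $ i $ j \<ge> 0"
  and W_rows: "\<And>i. (\<Sum>j\<in>UNIV. W $ i $ j) = 1"
  and W_cols: "\<And>j. (\<Sum>i\<in>UNIV. W $ i $ j) = 1"
  and W_graph: "\<And>i j. i \<noteq> j \<Longrightarrow> \<not> E i j \<Longrightarrow> W $ i $ j = 0"
  and W_null: "{v. (W - mat 1) *v v = 0} = span {vec 1 :: real^'n}"
  and W_gap: "onorm (\<lambda>v. (W - (\<chi> i j. 1 / real CARD('n))) *v v) < 1"
    \<comment> \<open>independent samples xi_i^t ~ D_i, unbiased stochastic gradients with bounded variance\<close>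
  and M_prob: "prob_space M"
  and xi_distr: "\<And>t i. distr M S (xi t i) = D i"
  and xi_indep: "prob_space.indep_vars M (\<lambda>_. S) (\<lambda>(t, i). xi t i) UNIV"
  and G_meas: "\<And>i. (\<lambda>(x, s). G i x s) \<in> borel_measurable (borel \<Otimes>\<^sub>M S)"
  and G_unbiased: "\<And>i x. x \<in> edom r \<Longrightarrow> has_bochner_integral (D i) (G i x) (gf i x)"
  and G_var: "\<And>i x. x \<in> edom r \<Longrightarrow>
                (\<integral>\<^sup>+ s. ennreal (norm (G i x s - gf i x)^2) \<partial>(D i)) \<le> ennreal (\<sigma>^2)"
    \<comment> \<open>initialization and step sizes\<close>
  and x0_dom: "\<And>i. x0 i \<in> edom r"
  and eta_pos: "\<eta> > 0"
  and lam_pos: "lam > 0"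
  and eta_le: "\<eta> \<le> lam"
  and lam_le: "lam \<le> 1 / (4 * L)"
  shows
    "(\<Sum>i\<in>UNIV. \<integral>\<omega>. real_of_ereal (moreau \<phi> lam (dX W G r \<eta> x0 xi (Suc t) \<omega> i)) \<partial>M)
     \<le> (\<Sum>i\<in>UNIV. \<integral>\<omega>. real_of_ereal (moreau \<phi> lam (dX W G r \<eta> x0 xi t \<omega> i)) \<partial>M)
       + (4 / lam) * (\<integral>\<omega>. perp_sq (dX W G r \<eta> x0 xi t \<omega>) \<partial>M)
       + (4 * \<eta>^2 / lam) * (\<integral>\<omega>. perp_sq (dY W G r \<eta> x0 xi t \<omega>) \<partial>M)
       - (\<eta> / (4 * lam^2)) *
           (\<integral>\<omega>. (\<Sum>i\<in>UNIV. norm (prox_of \<phi> lam (dX W G r \<eta> x0 xi t \<omega> i) - dX W G r \<eta> x0 xi t \<omega> i)^2) \<partial>M)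
       + \<eta>^2 * \<sigma>^2 / lam"
proof -
  interpret palg r f gf \<phi> L \<eta> lam W G x0 M S D xi \<sigma>
    by (intro palg.intro alg.intro setting.intro alg_axioms.intro palg_axioms.intro) (fact assms)+
  show ?thesis using main_palg[of t]
    unfolding env_def P_def dX_def dY_def aX_def aY_def .
qed

end
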